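(* Let $B$ and each $A^u$ ($u\in V(B)$) be cubic 3-connected graphs, $a^u\in V(A^u)$, and $G=B\{(A^u,a^u):u\in V(B)\}$. Suppose $v(A^u)\equiv 2\pmod 6$ for every $u$ and each $(A^u,a^u)$ satisfies: (h1) for every vertex $y$ of $A^u-(N^u\cup\{a^u\})$ adjacent to a vertex of $N^u$, $A^u-(N^u\cup\{a^u,y\})$ has no $\Lambda$-factor; (h2) for every edge $a^uz\in E(A^u)$, $A^u-\{a^u,z\}$ has a $\Lambda$-factor; (h3) for every 5-vertex path $W$ in $A^u$ with center vertex $a^u$, $A^u-W$ has a $\Lambda$-factor. Then: ($\gamma$3) every $\Lambda$-factor $Q$ of $G$ lies in $\Gamma(G,P)$ for exactly one $\Lambda$-factor $P$ of $B$ (in particular $\Gamma(G,P)\cap\Gamma(G,P')=\emptyset$ for distinct $P,P'\in\Gamma(B)$, and $\Gamma(G)=\bigcup_{P\in\Gamma(B)}\Gamma(G,P)$); ($\gamma$2) for every $\Lambda$-factor $P$ of $B$, the map sending $Q\in\Gamma(G,P)$ to the family $(Q_u)_{u\in V(B)}$, where $Q_u$ is the union of the components of $Q$ contained in $H_u(P)$, is a bijection from $\Gamma(G,P)$ onto $\prod_{u\in V(B)}\Gamma(H_u(P))$; and consequently $G$ has a $\Lambda$-factor if and only if $B$ has a $\Lambda$-factor.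
   Context: Graphs are finite and simple. A $\Lambda$-factor of a graph is a spanning subgraph each of whose components is a 3-vertex path; $\Gamma(H)$ is the set of $\Lambda$-factors of $H$; for a subgraph $W$, $H-W$ deletes the vertices of $W$. Graph-composition $G=B\{(A^u,a^u):u\in V(B)\}$: $B$ cubic, each $a^u$ of degree 3 in $A^u$, $N^u=N(a^u,A^u)$, $A_u=A^u-a^u$; fix for each $u$ a bijection between $N^u$ and the edges of $B$ at $u$; $G$ is the disjoint union of all $A_u$ plus, for each $uv\in E(B)$, an edge $\alpha(uv)$ joining the neighbour of $a^u$ corresponding to $uv$ with the neighbour of $a^v$ corresponding to $uv$; $E'(G)=\{\alpha(e):e\in E(B)\}$. For a $\Lambda$-factor $P$ of $B$, $\Gamma(G,P)$ is the set of $\Lambda$-factors $Q$ of $G$ with $\alpha^{-1}(E'(G)\cap E(Q))=E(P)$. For each path $uvw$ of $P$ (center $v$): for the end-vertex $u$, $H_u(P)=A_u-x_u$ where $x_u$ is the end of $\alpha(uv)$ in $A_u$ (similarly for $w$); for the center $v$, $H_v(P)$ is the graph obtained from $A_v$ by adding the edges $\alpha(uv)$ and $\alpha(vw)$ together with their end-vertices. *)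

theory Defs
  imports Main "HOL-Library.FuncSet"
begin

text \<open>A graph is a pair (vertex set, edge set); edges are 2-element vertex sets.\<close>
type_synonym 'a graph = "'a set \<times> 'a set set"

definition verts :: "'a graph \<Rightarrow> 'a set" where "verts G = fst G"
definition edges :: "'a graph \<Rightarrow> 'a set set" where "edges G = snd G"

definition simple_graph :: "'a graph \<Rightarrow> bool" where
  "simple_graph G \<longleftrightarrow> finite (verts G) \<and>
     (\<forall>e\<in>edges G. \<exists>x y. x \<noteq> y \<and> x \<in> verts G \<and> y \<in> verts G \<and> e = {x, y})"

definition adj :: "'a graph \<Rightarrow> 'a \<Rightarrow> 'a \<Rightarrow> bool" where
  "adj G x y \<longleftrightarrow> {x, y} \<in> edges G"

definition nbrs :: "'a graph \<Rightarrow> 'a \<Rightarrow> 'a set" where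
  "nbrs G x = {y. adj G x y}"

definition degree :: "'a graph \<Rightarrow> 'a \<Rightarrow> nat" where
  "degree G x = card (nbrs G x)"

definition cubic :: "'a graph \<Rightarrow> bool" where
  "cubic G \<longleftrightarrow> simple_graph G \<and> (\<forall>x\<in>verts G. degree G x = 3)"

definition del_verts :: "'a graph \<Rightarrow> 'a set \<Rightarrow> 'a graph" where
  "del_verts G S = (verts G - S, {e \<in> edges G. e \<inter> S = {}})"

definition reach :: "'a graph \<Rightarrow> 'a \<Rightarrow> 'a \<Rightarrow> bool" where
  "reach G x y \<longleftrightarrow> (x, y) \<in> ({(u, v). u \<in> verts G \<and> v \<in> verts G \<and> adj G u v})\<^sup>*"

definition connected :: "'a graph \<Rightarrow> bool" where
  "connected G \<longleftrightarrow> verts G \<noteq> {} \<and> (\<forall>x\<in>verts G. \<forall>y\<in>verts G. reach G x y)"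

definition k_connected :: "nat \<Rightarrow> 'a graph \<Rightarrow> bool" where
  "k_connected k G \<longleftrightarrow> card (verts G) > k \<and>
     (\<forall>S \<subseteq> verts G. card S < k \<longrightarrow> connected (del_verts G S))"

definition component :: "'a graph \<Rightarrow> 'a \<Rightarrow> 'a set" where
  "component G x = {y \<in> verts G. reach G x y}"

definition components :: "'a graph \<Rightarrow> 'a set set" where
  "components G = component G ` verts G"

text \<open>A spanning subgraph of H is identified with its edge set F (vertex set verts H).
  F is a Lambda-factor iff each component of (verts H, F) is a 3-vertex path.\<close>
definition is_P3 :: "'a set \<Rightarrow> 'a set set \<Rightarrow> bool" where
  "is_P3 C F \<longleftrightarrow> (\<exists>x y z. distinct [x, y, z] \<and> C = {x, y, z} \<and> F = {{x, y}, {y, z}})"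

definition lambda_factor :: "'a graph \<Rightarrow> 'a set set \<Rightarrow> bool" where
  "lambda_factor H F \<longleftrightarrow> F \<subseteq> edges H \<and>
     (\<forall>C\<in>components (verts H, F). is_P3 C {e \<in> F. e \<subseteq> C})"

definition Gamma :: "'a graph \<Rightarrow> 'a set set set" where
  "Gamma H = {F. lambda_factor H F}"

text \<open>Data: cubic graph B, graphs A u with distinguished vertex a u, and for each u a
  bijection phi u from the edges of B at u onto N^u = nbrs (A u) (a u).\<close>

definition inc_edges :: "'b graph \<Rightarrow> 'b \<Rightarrow> 'b set set" where
  "inc_edges B u = {e \<in> edges B. u \<in> e}"

definition lift_edges :: "'b \<Rightarrow> 'a set set \<Rightarrow> ('b \<times> 'a) set set" where
  "lift_edges u E = (\<lambda>e. Pair u ` e) ` E"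

text \<open>The edge alpha(e) of G corresponding to the edge e = {u,v} of B.\<close>
definition alpha :: "('b \<Rightarrow> 'b set \<Rightarrow> 'a) \<Rightarrow> 'b set \<Rightarrow> ('b \<times> 'a) set" where
  "alpha phi e = (\<lambda>u. (u, phi u e)) ` e"

definition compose :: "'b graph \<Rightarrow> ('b \<Rightarrow> 'a graph) \<Rightarrow> ('b \<Rightarrow> 'a) \<Rightarrow> ('b \<Rightarrow> 'b set \<Rightarrow> 'a)
    \<Rightarrow> ('b \<times> 'a) graph" where
  "compose B A a phi =
     ((\<Union>u\<in>verts B. {u} \<times> (verts (A u) - {a u})),
      (\<Union>u\<in>verts B. lift_edges u (edges (del_verts (A u) {a u}))) \<union> alpha phi ` edges B)"

definition composition_data :: "'b graph \<Rightarrow> ('b \<Rightarrow> 'a graph) \<Rightarrow> ('b \<Rightarrow> 'a) \<Rightarrow> ('b \<Rightarrow> 'b set \<Rightarrow> 'a)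
    \<Rightarrow> bool" where
  "composition_data B A a phi \<longleftrightarrow> cubic B \<and>
     (\<forall>u\<in>verts B. simple_graph (A u) \<and> a u \<in> verts (A u) \<and> degree (A u) (a u) = 3 \<and>
        bij_betw (phi u) (inc_edges B u) (nbrs (A u) (a u)))"

text \<open>Gamma(G,P): Lambda-factors Q of G with alpha^{-1}(E'(G) \<inter> E(Q)) = E(P).\<close>
definition GammaGP :: "'b graph \<Rightarrow> ('b \<Rightarrow> 'a graph) \<Rightarrow> ('b \<Rightarrow> 'a) \<Rightarrow> ('b \<Rightarrow> 'b set \<Rightarrow> 'a)
    \<Rightarrow> 'b set set \<Rightarrow> ('b \<times> 'a) set set set" where
  "GammaGP B A a phi P =
     {Q. lambda_factor (compose B A a phi) Q \<and> {e \<in> edges B. alpha phi e \<in> Q} = P}"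

definition Hgraph :: "'b graph \<Rightarrow> ('b \<Rightarrow> 'a graph) \<Rightarrow> ('b \<Rightarrow> 'a) \<Rightarrow> ('b \<Rightarrow> 'b set \<Rightarrow> 'a)
    \<Rightarrow> 'b set set \<Rightarrow> 'b \<Rightarrow> ('b \<times> 'a) graph" where
  "Hgraph B A a phi P u =
     (let Pu = {e \<in> P. u \<in> e};
          Au = del_verts (A u) {a u} in
      if card Pu = 2 then
        ({u} \<times> verts Au \<union> \<Union>(alpha phi ` Pu),
         lift_edges u (edges Au) \<union> alpha phi ` Pu)
      else
        (let x = phi u (THE e. e \<in> Pu); Au' = del_verts Au {x} in
         ({u} \<times> verts Au', lift_edges u (edges Au'))))"

definition restrict_factor :: "('c graph) \<Rightarrow> 'c set set \<Rightarrow> 'c graph \<Rightarrow> 'c set set" where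
  "restrict_factor G Q H =
     {f \<in> Q. \<exists>C\<in>components (verts G, Q). C \<subseteq> verts H \<and> {e \<in> Q. e \<subseteq> C} \<subseteq> edges H \<and> f \<subseteq> C}"

end

theory Submission
  imports Defs
begin

definition closedP3 :: "'c set \<Rightarrow> 'c set set \<Rightarrow> 'c set \<Rightarrow> bool" where
  "closedP3 V F C \<longleftrightarrow> C \<subseteq> V \<and> is_P3 C {e\<in>F. e \<subseteq> C} \<and> (\<forall>f\<in>F. f \<inter> C \<noteq> {} \<longrightarrow> f \<subseteq> C)"

definition good :: "'c set \<Rightarrow> 'c set set \<Rightarrow> bool" where
  "good V F \<longleftrightarrow> (\<forall>x\<in>V. \<exists>C. x \<in> C \<and> closedP3 V F C)"

lemma closedP3_D:
  assumes "closedP3 V F C"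
  shows "C \<subseteq> V" "is_P3 C {e\<in>F. e \<subseteq> C}" "\<And>f. f \<in> F \<Longrightarrow> f \<inter> C \<noteq> {} \<Longrightarrow> f \<subseteq> C"
  using assms unfolding closedP3_def by auto

lemma adj_pair: "adj (V,F) x y \<longleftrightarrow> {x,y} \<in> F"
  by (simp add: adj_def edges_def)

lemma reach_pair: "reach (V,F) x y \<longleftrightarrow> (x,y) \<in> {(u,v). u\<in>V \<and> v\<in>V \<and> {u,v}\<in>F}\<^sup>*"
  by (simp add: reach_def adj_pair verts_def)

lemma closedP3_reach:
  assumes c: "closedP3 V F C" and x: "x \<in> C" and r: "reach (V,F) x y"
  shows "y \<in> C"
proof -
  have "(x,y) \<in> {(u,v). u\<in>V \<and> v\<in>V \<and> {u,v}\<in>F}\<^sup>*" using r by (simp add: reach_pair)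
  then show ?thesis
  proof (induction rule: rtrancl_induct)
    case base then show ?case using x by simp
  next
    case (step u v)
    then have uv: "{u,v} \<in> F" "{u,v} \<inter> C \<noteq> {}" by auto
    have cl: "\<forall>f\<in>F. f \<inter> C \<noteq> {} \<longrightarrow> f \<subseteq> C" using c by (simp add: closedP3_def)
    have "{u,v} \<subseteq> C" using cl[rule_format, OF uv] .
    then show ?case by simp
  qed
qed

lemma P3_edges_in:
  assumes "is_P3 C {e\<in>F. e \<subseteq> C}"
  shows "\<exists>x y z. distinct [x,y,z] \<and> C = {x,y,z} \<and> {x,y} \<in> F \<and> {y,z} \<in> F \<and> {e\<in>F. e \<subseteq> C} = {{x,y},{y,z}}"
proof -
  obtain x y z where d: "distinct [x,y,z]" "C = {x,y,z}" "{e\<in>F. e \<subseteq> C} = {{x,y},{y,z}}"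
    using assms unfolding is_P3_def by blast
  then have "{x,y} \<in> {e\<in>F. e \<subseteq> C}" "{y,z} \<in> {e\<in>F. e \<subseteq> C}" by auto
  then show ?thesis using d by blast
qed

lemma closedP3_component:
  assumes c: "closedP3 V F C" and x: "x \<in> C"
  shows "component (V,F) x = C"
proof
  show "component (V,F) x \<subseteq> C"
    using closedP3_reach[OF c x] unfolding component_def by blast
next
  have CV: "C \<subseteq> V" using c by (simp add: closedP3_def)
  obtain p q r where d: "distinct [p,q,r]" "C = {p,q,r}" "{p,q} \<in> F" "{q,r} \<in> F"
    using P3_edges_in[OF closedP3_D(2)[OF c]] by blast
  let ?R = "{(u,v). u\<in>V \<and> v\<in>V \<and> {u,v}\<in>F}"
  have e1: "(p,q) \<in> ?R\<^sup>*" "(q,p) \<in> ?R\<^sup>*" "(q,r) \<in> ?R\<^sup>*" "(r,q) \<in> ?R\<^sup>*"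
    using d CV by (auto intro!: r_into_rtrancl simp: insert_commute)
  have all: "\<And>s t. s \<in> C \<Longrightarrow> t \<in> C \<Longrightarrow> (s,t) \<in> ?R\<^sup>*"
    using e1 d(2) by (auto intro: rtrancl_trans)
  show "C \<subseteq> component (V,F) x"
    using all x CV by (auto simp: component_def reach_pair verts_def)
qed

lemma closedP3_unique:
  "closedP3 V F C \<Longrightarrow> closedP3 V F C' \<Longrightarrow> x \<in> C \<Longrightarrow> x \<in> C' \<Longrightarrow> C = C'"
  using closedP3_component by metis

definition simple_edges :: "'c set \<Rightarrow> 'c set set \<Rightarrow> bool" where
  "simple_edges V E \<longleftrightarrow> (\<forall>e\<in>E. \<exists>x y. x \<noteq> y \<and> x \<in> V \<and> y \<in> V \<and> e = {x, y})"

lemma simple_edgesD: "simple_edges V E \<Longrightarrow> e \<in> E \<Longrightarrow> \<exists>x y. x \<noteq> y \<and> x \<in> V \<and> y \<in> V \<and> e = {x, y}"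
  unfolding simple_edges_def by blast

lemma lf_iff:
  assumes s: "simple_edges (verts H) (edges H)"
  shows "lambda_factor H F \<longleftrightarrow> F \<subseteq> edges H \<and> good (verts H) F"
proof
  assume lf: "lambda_factor H F"
  then have FE: "F \<subseteq> edges H" by (simp add: lambda_factor_def)
  show "F \<subseteq> edges H \<and> good (verts H) F"
  proof (intro conjI FE, unfold good_def, intro ballI)
    fix x assume x: "x \<in> verts H"
    let ?C = "component (verts H, F) x"
    have inC: "?C \<in> components (verts H, F)" using x by (simp add: components_def verts_def)
    have p3: "is_P3 ?C {e\<in>F. e \<subseteq> ?C}" using lf inC by (simp add: lambda_factor_def)
    have xC: "x \<in> ?C" using x by (simp add: component_def reach_def verts_def)
    have CV: "?C \<subseteq> verts H" by (auto simp: component_def verts_def)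
    have cl: "\<forall>f\<in>F. f \<inter> ?C \<noteq> {} \<longrightarrow> f \<subseteq> ?C"
    proof (intro ballI impI)
      fix f assume f: "f \<in> F" "f \<inter> ?C \<noteq> {}"
      have fE: "f \<in> edges H" using FE f(1) by blast
      obtain p q where pq: "p \<noteq> q" "p \<in> verts H" "q \<in> verts H" "f = {p,q}"
        using simple_edgesD[OF s fE] by blast
      have R: "(p,q) \<in> {(u,v). u\<in>verts H \<and> v\<in>verts H \<and> {u,v}\<in>F}"
              "(q,p) \<in> {(u,v). u\<in>verts H \<and> v\<in>verts H \<and> {u,v}\<in>F}"
        using pq f by (auto simp: insert_commute)
      let ?R = "{(u,v). u\<in>verts H \<and> v\<in>verts H \<and> {u,v}\<in>F}"
      have Ceq: "?C = {t \<in> verts H. (x,t) \<in> ?R\<^sup>*}" by (simp add: component_def reach_pair verts_def)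
      have "p \<in> ?C \<or> q \<in> ?C" using f(2) pq(4) by blast
      then have "(x,p) \<in> ?R\<^sup>* \<and> (x,q) \<in> ?R\<^sup>*"
      proof
        assume "p \<in> ?C"
        then have "(x,p) \<in> ?R\<^sup>*" using Ceq by blast
        then show ?thesis using R(1) by (blast intro: rtrancl_into_rtrancl)
      next
        assume "q \<in> ?C"
        then have "(x,q) \<in> ?R\<^sup>*" using Ceq by blast
        then show ?thesis using R(2) by (blast intro: rtrancl_into_rtrancl)
      qed
      then show "f \<subseteq> ?C" using Ceq pq by blast
    qed
    show "\<exists>C. x \<in> C \<and> closedP3 (verts H) F C"
      using xC CV p3 cl by (auto simp: closedP3_def)
  qed
next
  assume g: "F \<subseteq> edges H \<and> good (verts H) F"
  show "lambda_factor H F"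
    unfolding lambda_factor_def
  proof (intro conjI ballI)
    show "F \<subseteq> edges H" using g by simp
    fix C assume "C \<in> components (verts H, F)"
    then obtain y where y: "y \<in> verts H" "C = component (verts H, F) y"
      by (auto simp: components_def verts_def)
    obtain C' where C': "y \<in> C'" "closedP3 (verts H) F C'" using g y(1) by (auto simp: good_def)
    have "C = C'" using closedP3_component[OF C'(2) C'(1)] y by simp
    then show "is_P3 C {e \<in> F. e \<subseteq> C}" using C' by (simp add: closedP3_def)
  qed
qed

lemma good_restrict:
  assumes "\<And>x. x \<in> W \<Longrightarrow> \<exists>C. x \<in> C \<and> C \<subseteq> W \<and> closedP3 V F C"
  shows "good W {f\<in>F. f \<subseteq> W}"
  unfolding good_def
proof
  fix x assume "x \<in> W"
  then obtain C where C: "x \<in> C" "C \<subseteq> W" "closedP3 V F C" using assms by blast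
  have eq: "{e \<in> {f\<in>F. f \<subseteq> W}. e \<subseteq> C} = {e\<in>F. e \<subseteq> C}" using C(2) by auto
  show "\<exists>C. x \<in> C \<and> closedP3 W {f\<in>F. f \<subseteq> W} C"
    using C eq unfolding closedP3_def by (intro exI[of _ C]) auto
qed

lemma good_glue:
  assumes disj: "\<And>i j. i \<in> I \<Longrightarrow> j \<in> I \<Longrightarrow> i \<noteq> j \<Longrightarrow> Vs i \<inter> Vs j = {}"
    and sub: "\<And>i f. i \<in> I \<Longrightarrow> f \<in> Fs i \<Longrightarrow> f \<subseteq> Vs i \<and> f \<noteq> {}"
    and g: "\<And>i. i \<in> I \<Longrightarrow> good (Vs i) (Fs i)"
  shows "good (\<Union>i\<in>I. Vs i) (\<Union>i\<in>I. Fs i)"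
  unfolding good_def
proof
  fix x assume "x \<in> (\<Union>i\<in>I. Vs i)"
  then obtain i where i: "i \<in> I" "x \<in> Vs i" by auto
  then obtain C where C: "x \<in> C" "closedP3 (Vs i) (Fs i) C" using g unfolding good_def by blast
  have CV: "C \<subseteq> Vs i" using C by (simp add: closedP3_def)
  have eq: "{e \<in> (\<Union>i\<in>I. Fs i). e \<subseteq> C} = {e\<in>Fs i. e \<subseteq> C}"
  proof (auto simp: i(1))
    fix j e assume j: "j \<in> I" "e \<in> Fs j" "e \<subseteq> C"
    then have "e \<subseteq> Vs j" "e \<noteq> {}" using sub by auto
    then have "j = i" using disj[OF j(1) i(1)] CV j(3) by blast
    then show "e \<in> Fs i" using j by simp
  qed
  have cl: "\<forall>f\<in>(\<Union>i\<in>I. Fs i). f \<inter> C \<noteq> {} \<longrightarrow> f \<subseteq> C"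
  proof (intro ballI impI)
    fix f assume f: "f \<in> (\<Union>i\<in>I. Fs i)" "f \<inter> C \<noteq> {}"
    then obtain j where j: "j \<in> I" "f \<in> Fs j" by auto
    then have "f \<subseteq> Vs j" using sub by auto
    then have "j = i" using disj[OF j(1) i(1)] CV f(2) by blast
    then show "f \<subseteq> C" using C(2) j f(2) unfolding closedP3_def by blast
  qed
  show "\<exists>C. x \<in> C \<and> closedP3 (\<Union>i\<in>I. Vs i) (\<Union>i\<in>I. Fs i) C"
    using C CV eq cl i unfolding closedP3_def by (intro exI[of _ C]) auto
qed

lemma good_map:
  assumes inj: "inj_on g U" and VU: "V \<subseteq> U" and FU: "\<And>f. f \<in> F \<Longrightarrow> f \<subseteq> U"
    and gd: "good V F"
  shows "good (g ` V) ((`) g ` F)"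
  unfolding good_def
proof
  fix y assume "y \<in> g ` V"
  then obtain x where x: "x \<in> V" "y = g x" by auto
  then obtain C where C: "x \<in> C" "closedP3 V F C" using gd unfolding good_def by blast
  have CV: "C \<subseteq> V" using C by (simp add: closedP3_def)
  have "is_P3 C {e\<in>F. e \<subseteq> C}" using C by (simp add: closedP3_def)
  then obtain p q r where d: "distinct [p,q,r]" "C = {p,q,r}" "{e\<in>F. e \<subseteq> C} = {{p,q},{q,r}}"
    unfolding is_P3_def by blast
  have CU: "C \<subseteq> U" using CV VU by auto
  have sub_iff: "g ` f \<subseteq> g ` C \<longleftrightarrow> f \<subseteq> C" if f: "f \<in> F" for f
  proof
    assume h: "g ` f \<subseteq> g ` C"
    show "f \<subseteq> C"
    proof
      fix z assume "z \<in> f"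
      then have "z \<in> U" "g z \<in> g ` C" using FU[OF f] h by auto
      then show "z \<in> C" using inj_on_image_mem_iff[OF inj _ CU] by blast
    qed
  qed auto
  have int_iff: "\<And>f. f \<in> F \<Longrightarrow> g ` f \<inter> g ` C = g ` (f \<inter> C)"
    using inj FU CV VU by (metis inj_on_image_Int subset_trans)
  have eq: "{e \<in> (`) g ` F. e \<subseteq> g ` C} = (`) g ` {e\<in>F. e \<subseteq> C}"
    using sub_iff by auto
  have pqr: "p \<in> U" "q \<in> U" "r \<in> U" using d CV VU by auto
  have gd3: "distinct [g p, g q, g r]"
    using d(1) inj_onD[OF inj _ pqr(1) pqr(2)] inj_onD[OF inj _ pqr(1) pqr(3)] inj_onD[OF inj _ pqr(2) pqr(3)] by auto
  have p3: "is_P3 (g ` C) {e \<in> (`) g ` F. e \<subseteq> g ` C}"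
    unfolding is_P3_def eq d(3) using gd3 d(2) by (intro exI[of _ "g p"] exI[of _ "g q"] exI[of _ "g r"]) auto
  have cl: "\<forall>f\<in>(`) g ` F. f \<inter> g ` C \<noteq> {} \<longrightarrow> f \<subseteq> g ` C"
  proof (intro ballI impI)
    fix f' assume "f' \<in> (`) g ` F" "f' \<inter> g ` C \<noteq> {}"
    then obtain f where f: "f \<in> F" "f' = g ` f" "g ` f \<inter> g ` C \<noteq> {}" by auto
    then have "f \<inter> C \<noteq> {}" using int_iff by auto
    then have "f \<subseteq> C" using C f(1) unfolding closedP3_def by blast
    then show "f' \<subseteq> g ` C" using f by auto
  qed
  show "\<exists>C. y \<in> C \<and> closedP3 (g ` V) ((`) g ` F) C"
    using C CV x p3 cl unfolding closedP3_def by (intro exI[of _ "g ` C"]) auto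
qed

lemma P3_card: "is_P3 C E \<Longrightarrow> card C = 3 \<and> finite C"
  unfolding is_P3_def by (elim exE conjE) simp

lemma P3_cross:
  assumes "is_P3 C E" "x \<in> C" "x \<in> W" "\<not> C \<subseteq> W"
  shows "\<exists>f\<in>E. f \<inter> W \<noteq> {} \<and> \<not> f \<subseteq> W"
proof -
  obtain p q r where d: "distinct [p,q,r]" "C = {p,q,r}" "E = {{p,q},{q,r}}"
    using assms(1) unfolding is_P3_def by blast
  show ?thesis
  proof (cases "q \<in> W")
    case True
    then have "p \<notin> W \<or> r \<notin> W" using assms(4) d(2) by blast
    then show ?thesis using True d(3) by auto
  next
    case False
    then have "p \<in> W \<or> r \<in> W" using assms(2,3) d(2) by blast
    then show ?thesis using False d(3) by auto
  qed
qed

lemma P3_cover: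
  assumes "is_P3 C E" "x \<in> C"
  shows "\<exists>f\<in>E. x \<in> f"
proof -
  obtain p q r where d: "distinct [p,q,r]" "C = {p,q,r}" "E = {{p,q},{q,r}}"
    using assms(1) unfolding is_P3_def by blast
  then show ?thesis using assms(2) by blast
qed

lemma P3_orient:
  assumes "is_P3 C E" "f \<in> E"
  shows "\<exists>p q r. distinct [p,q,r] \<and> C = {p,q,r} \<and> E = {{p,q},{q,r}} \<and> f = {p,q}"
proof -
  obtain x y z where d: "distinct [x,y,z]" "C = {x,y,z}" "E = {{x,y},{y,z}}"
    using assms unfolding is_P3_def by blast
  show ?thesis
  proof (cases "f = {x,y}")
    case True then show ?thesis using d by blast
  next
    case False
    then have "f = {z,y}" using d assms(2) by (auto simp: insert_commute)
    moreover have "{{x,y},{y,z}} = {{z,y},{y,x}}" by (simp add: insert_commute)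
    moreover have "distinct [z,y,x]" using d(1) by auto
    moreover have "C = {z,y,x}" using d(2) by blast
    ultimately show ?thesis using d(3) by blast
  qed
qed

lemma reach_closed:
  assumes "reach G x y" "x \<in> T" "\<And>u v. u \<in> T \<Longrightarrow> v \<in> verts G \<Longrightarrow> adj G u v \<Longrightarrow> v \<in> T"
  shows "y \<in> T"
proof -
  have "(x,y) \<in> {(u, v). u \<in> verts G \<and> v \<in> verts G \<and> adj G u v}\<^sup>*" using assms(1) by (simp add: reach_def)
  then show ?thesis
    by (induction rule: rtrancl_induct) (use assms in auto)
qed

lemma card3_ex: "card X = 3 \<Longrightarrow> p \<in> X \<Longrightarrow> q \<in> X \<Longrightarrow> p \<noteq> q \<Longrightarrow> \<exists>r. X = {p,q,r} \<and> r \<noteq> p \<and> r \<noteq> q"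
proof -
  assume h: "card X = 3" "p \<in> X" "q \<in> X" "p \<noteq> q"
  then have "card (X - {p,q}) = 1" by (simp add: card_Diff_subset)
  then obtain r where r: "X - {p,q} = {r}" by (meson card_1_singletonE)
  then have "X = {p,q,r}" "r \<noteq> p" "r \<noteq> q" using h by blast+
  then show ?thesis by blast
qed

definition Pat :: "'c set set \<Rightarrow> 'c \<Rightarrow> 'c set set" where
  "Pat P u = {e\<in>P. u \<in> e}"

lemma two_set_ex: "simple_edges V E \<Longrightarrow> e \<in> E \<Longrightarrow> u \<in> e \<Longrightarrow> \<exists>v. v \<noteq> u \<and> v \<in> V \<and> u \<in> V \<and> e = {u,v}"
proof -
  assume h: "simple_edges V E" "e \<in> E" "u \<in> e"
  obtain x y where xy: "x \<noteq> y" "x \<in> V" "y \<in> V" "e = {x,y}" using simple_edgesD[OF h(1,2)] by blast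
  show ?thesis
  proof (cases "u = x")
    case True then show ?thesis using xy by (intro exI[of _ y]) simp
  next
    case False then have "u = y" using xy h(3) by blast
    then show ?thesis using xy by (intro exI[of _ x]) (auto simp: insert_commute)
  qed
qed

lemma Bfac2:
  assumes s: "simple_edges V E" and PE: "P \<subseteq> E" and g: "good V P" and u: "u \<in> V"
  shows "card (Pat P u) = 1 \<or> card (Pat P u) = 2"
    and "\<And>e v. e \<in> P \<Longrightarrow> u \<in> e \<Longrightarrow> v \<in> e \<Longrightarrow> u \<noteq> v \<Longrightarrow> (card (Pat P u) = 2 \<longleftrightarrow> card (Pat P v) = 1)"
proof -
  have key: "\<exists>x y z. distinct [x,y,z] \<and> {x,y} \<in> P \<and> {y,z} \<in> P \<and> w \<in> {x,y,z} \<and>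
     Pat P x = {{x,y}} \<and> Pat P y = {{x,y},{y,z}} \<and> Pat P z = {{y,z}}" if w: "w \<in> V" for w
  proof -
    obtain C where C: "w \<in> C" "closedP3 V P C" using g w unfolding good_def by blast
    obtain x y z where d: "distinct [x,y,z]" "C = {x,y,z}" "{x,y} \<in> P" "{y,z} \<in> P"
        "{e\<in>P. e \<subseteq> C} = {{x,y},{y,z}}"
      using P3_edges_in[OF closedP3_D(2)[OF C(2)]] by blast
    have cl: "\<And>f. f \<in> P \<Longrightarrow> f \<inter> C \<noteq> {} \<Longrightarrow> f \<subseteq> C" using closedP3_D(3)[OF C(2)] by blast
    have sub: "\<And>t. t \<in> C \<Longrightarrow> Pat P t \<subseteq> {{x,y},{y,z}}"
    proof
      fix t f assume t: "t \<in> C" and f: "f \<in> Pat P t"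
      then have "f \<in> P" "f \<inter> C \<noteq> {}" by (auto simp: Pat_def)
      then have "f \<subseteq> C" using cl by blast
      then show "f \<in> {{x,y},{y,z}}" using d(5) \<open>f \<in> P\<close> by blast
    qed
    have n1: "x \<notin> {y,z}" "z \<notin> {x,y}" using d(1) by auto
    have "Pat P x = {{x,y}}"
    proof
      show "Pat P x \<subseteq> {{x,y}}" using sub[of x] d(2) n1 by (auto simp: Pat_def)
      show "{{x,y}} \<subseteq> Pat P x" using d(3) by (simp add: Pat_def)
    qed
    moreover have "Pat P z = {{y,z}}"
    proof
      show "Pat P z \<subseteq> {{y,z}}" using sub[of z] d(2) n1 by (auto simp: Pat_def)
      show "{{y,z}} \<subseteq> Pat P z" using d(4) by (simp add: Pat_def)
    qed
    moreover have "Pat P y = {{x,y},{y,z}}"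
    proof
      show "Pat P y \<subseteq> {{x,y},{y,z}}" using sub[of y] d(2) by blast
      show "{{x,y},{y,z}} \<subseteq> Pat P y" using d(3,4) by (simp add: Pat_def)
    qed
    ultimately show ?thesis using d C(1) by blast
  qed
  have c2: "card {{x,y},{y,z}} = 2" if "distinct [x,y,z]" for x y z :: 'c
  proof -
    have "{x,y} \<noteq> {y,z}" using that by (auto simp: doubleton_eq_iff)
    then show ?thesis by simp
  qed
  show "card (Pat P u) = 1 \<or> card (Pat P u) = 2"
  proof -
    obtain x y z where k: "distinct [x,y,z]" "u \<in> {x,y,z}"
     "Pat P x = {{x,y}}" "Pat P y = {{x,y},{y,z}}" "Pat P z = {{y,z}}"
      using key[OF u] by (elim exE conjE) (rule that; assumption)
    have cc: "card {{x,y},{y,z}} = 2" using c2[OF k(1)] .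
    have "u = x \<or> u = y \<or> u = z" using k(2) by blast
    then show ?thesis
    proof (elim disjE)
      assume "u = x" then show ?thesis using k(3) by simp
    next
      assume "u = y" then show ?thesis using k(4) cc by simp
    next
      assume "u = z" then show ?thesis using k(5) by simp
    qed
  qed
  fix e v assume e: "e \<in> P" "u \<in> e" "v \<in> e" "u \<noteq> v"
  obtain x y z where k: "distinct [x,y,z]" "{x,y} \<in> P" "{y,z} \<in> P" "u \<in> {x,y,z}"
     "Pat P x = {{x,y}}" "Pat P y = {{x,y},{y,z}}" "Pat P z = {{y,z}}"
    using key[OF u] by (elim exE conjE) (rule that; assumption)
  have cy: "card (Pat P y) = 2" using c2[OF k(1)] k(6) by simp
  have "e \<in> Pat P u" using e by (simp add: Pat_def)
  have eu: "e \<in> {{x,y},{y,z}}" using \<open>e \<in> Pat P u\<close> k(4,5,6,7) by auto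
  have ev: "v \<in> {x,y,z}" using eu e(3) by auto
  have cx: "card (Pat P x) = 1" "card (Pat P z) = 1" using k(5,7) by simp_all
  have nxz: "x \<noteq> y" "y \<noteq> z" "x \<noteq> z" using k(1) by auto
  have uv: "(u = y \<and> (v = x \<or> v = z)) \<or> (v = y \<and> (u = x \<or> u = z))"
    using eu e(2,3,4) by auto
  then show "card (Pat P u) = 2 \<longleftrightarrow> card (Pat P v) = 1"
    using cy cx by auto
qed

lemma Bfac1:
  assumes s: "simple_edges V E" and PE: "P \<subseteq> E"
    and c12: "\<And>u. u \<in> V \<Longrightarrow> card (Pat P u) = 1 \<or> card (Pat P u) = 2"
    and alt: "\<And>e u v. e \<in> P \<Longrightarrow> u \<in> e \<Longrightarrow> v \<in> e \<Longrightarrow> u \<noteq> v \<Longrightarrow> (card (Pat P u) = 2 \<longleftrightarrow> card (Pat P v) = 1)"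
  shows "good V P"
proof -
  have other: "\<exists>v. v \<noteq> u \<and> v \<in> V \<and> u \<in> V \<and> e = {u,v}" if "e \<in> P" "u \<in> e" for e u
    using two_set_ex[OF s] that PE by blast
  have center: "\<exists>C. u \<in> C \<and> closedP3 V P C \<and> (\<forall>e\<in>Pat P u. e \<subseteq> C)" if u: "u \<in> V" "card (Pat P u) = 2" for u
  proof -
    obtain e1 e2 where e12: "e1 \<noteq> e2" "Pat P u = {e1,e2}" using u(2) by (meson card_2_iff)
    have ein: "e1 \<in> P" "u \<in> e1" "e2 \<in> P" "u \<in> e2" using e12 by (auto simp: Pat_def)
    obtain v1 where v1: "v1 \<noteq> u" "v1 \<in> V" "e1 = {u,v1}" using other ein by blast
    obtain v2 where v2: "v2 \<noteq> u" "v2 \<in> V" "e2 = {u,v2}" using other ein by blast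
    have v12: "v1 \<noteq> v2" using v1 v2 e12 by auto
    have c1: "card (Pat P v1) = 1" using alt[OF ein(1,2)] v1 u(2) by auto
    have c2: "card (Pat P v2) = 1" using alt[OF ein(3,4)] v2 u(2) by auto
    have p1: "Pat P v1 = {e1}"
    proof -
      have "e1 \<in> Pat P v1" using ein v1 by (auto simp: Pat_def)
      then show ?thesis using c1 by (metis card_1_singletonE singletonD)
    qed
    have p2: "Pat P v2 = {e2}"
    proof -
      have "e2 \<in> Pat P v2" using ein v2 by (auto simp: Pat_def)
      then show ?thesis using c2 by (metis card_1_singletonE singletonD)
    qed
    let ?C = "{v1,u,v2}"
    have inP: "\<And>f. f \<in> P \<Longrightarrow> f \<inter> ?C \<noteq> {} \<Longrightarrow> f = e1 \<or> f = e2"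
    proof -
      fix f assume f: "f \<in> P" "f \<inter> ?C \<noteq> {}"
      then have "f \<in> Pat P v1 \<or> f \<in> Pat P u \<or> f \<in> Pat P v2" by (auto simp: Pat_def)
      then show "f = e1 \<or> f = e2" using p1 p2 e12 by auto
    qed
    have eqE: "{e\<in>P. e \<subseteq> ?C} = {{v1,u},{u,v2}}"
    proof
      show "{e\<in>P. e \<subseteq> ?C} \<subseteq> {{v1,u},{u,v2}}"
      proof
        fix f assume f: "f \<in> {e\<in>P. e \<subseteq> ?C}"
        obtain x y where "x \<noteq> y" "f = {x,y}" using simple_edgesD[OF s, of f] f PE by blast
        then have "f \<inter> ?C \<noteq> {}" using f by auto
        then have "f = e1 \<or> f = e2" using inP f by blast
        then show "f \<in> {{v1,u},{u,v2}}" using v1 v2 by (auto simp: insert_commute)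
      qed
      show "{{v1,u},{u,v2}} \<subseteq> {e\<in>P. e \<subseteq> ?C}" using ein v1 v2 by (auto simp: insert_commute)
    qed
    have "closedP3 V P ?C"
      unfolding closedP3_def
    proof (intro conjI ballI impI)
      show "?C \<subseteq> V" using u v1 v2 by auto
      show "is_P3 ?C {e\<in>P. e \<subseteq> ?C}" unfolding is_P3_def eqE
        using v1 v2 v12 by (intro exI[of _ v1] exI[of _ u] exI[of _ v2]) auto
      fix f assume "f \<in> P" "f \<inter> ?C \<noteq> {}"
      then have "f = e1 \<or> f = e2" using inP by blast
      then show "f \<subseteq> ?C" using v1 v2 by auto
    qed
    moreover have "\<forall>e\<in>Pat P u. e \<subseteq> ?C" using e12(2) v1(3) v2(3) by auto
    ultimately show ?thesis by (intro exI[of _ ?C] conjI) simp_all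
  qed
  show ?thesis unfolding good_def
  proof
    fix u assume u: "u \<in> V"
    show "\<exists>C. u \<in> C \<and> closedP3 V P C"
    proof (cases "card (Pat P u) = 2")
      case True then show ?thesis using center u by blast
    next
      case False
      then have c1: "card (Pat P u) = 1" using c12 u by blast
      then obtain e where "Pat P u = {e}" by (meson card_1_singletonE)
      then have e: "e \<in> P" "u \<in> e" by (auto simp: Pat_def)
      obtain v where v: "v \<noteq> u" "v \<in> V" "e = {u,v}" using other e by blast
      have "card (Pat P v) = 2" using alt[OF e(1) _ e(2), of v] v c1 by auto
      then obtain C where C: "v \<in> C" "closedP3 V P C" "\<forall>e\<in>Pat P v. e \<subseteq> C" using center v by blast
      have "e \<in> Pat P v" using e v by (simp add: Pat_def)
      then have "u \<in> C" using C(3) v by auto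
      then show ?thesis using C by blast
    qed
  qed
qed

lemma simple_graph_edges: "simple_graph H \<Longrightarrow> simple_edges (verts H) (edges H)"
  unfolding simple_graph_def simple_edges_def by blast

lemma simple_del: "simple_graph H \<Longrightarrow> simple_edges (verts (del_verts H S)) (edges (del_verts H S))"
  unfolding simple_graph_def simple_edges_def del_verts_def verts_def edges_def by fastforce

lemma verts_del[simp]: "verts (del_verts H S) = verts H - S" by (simp add: del_verts_def verts_def)
lemma edges_del[simp]: "edges (del_verts H S) = {e\<in>edges H. e \<inter> S = {}}" by (simp add: del_verts_def edges_def)

lemma nbrs_in: "simple_graph H \<Longrightarrow> y \<in> nbrs H x \<Longrightarrow> y \<in> verts H \<and> x \<in> verts H \<and> y \<noteq> x \<and> {x,y} \<in> edges H"
proof -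
  assume s: "simple_graph H" and y: "y \<in> nbrs H x"
  then have e: "{x,y} \<in> edges H" by (simp add: nbrs_def adj_def)
  obtain p q where "p \<noteq> q" "p \<in> verts H" "q \<in> verts H" "{x,y} = {p,q}"
    using simple_edgesD[OF simple_graph_edges[OF s] e] by blast
  then show ?thesis using e by (auto simp: doubleton_eq_iff)
qed

lemma alpha_mem: "p \<in> alpha phi e \<longleftrightarrow> fst p \<in> e \<and> snd p = phi (fst p) e"
  by (cases p) (auto simp: alpha_def)

lemma fst_alpha: "fst ` alpha phi e = e"
  by (force simp: alpha_def)

lemma alpha_uv: "alpha phi {u,v} = {(u, phi u {u,v}), (v, phi v {u,v})}"
  by (simp add: alpha_def)

lemma alpha_inj: "alpha phi e = alpha phi e' \<Longrightarrow> e = e'"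
  using fst_alpha by metis

locale setting =
  fixes B :: "'b graph" and A :: "'b \<Rightarrow> 'a graph" and a :: "'b \<Rightarrow> 'a"
    and phi :: "'b \<Rightarrow> 'b set \<Rightarrow> 'a"
  assumes comp: "composition_data B A a phi"
    and A3: "\<And>u. u \<in> verts B \<Longrightarrow> cubic (A u) \<and> k_connected 3 (A u)"
    and mod6: "\<And>u. u \<in> verts B \<Longrightarrow> card (verts (A u)) mod 6 = 2"
    and h1: "\<And>u y. u \<in> verts B \<Longrightarrow> y \<in> verts (A u) - (nbrs (A u) (a u) \<union> {a u}) \<Longrightarrow>
               (\<exists>n\<in>nbrs (A u) (a u). adj (A u) y n) \<Longrightarrow>
               Gamma (del_verts (A u) (nbrs (A u) (a u) \<union> {a u, y})) = {}"
    and h2: "\<And>u z. u \<in> verts B \<Longrightarrow> {a u, z} \<in> edges (A u) \<Longrightarrow>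
               Gamma (del_verts (A u) {a u, z}) \<noteq> {}"
    and h3: "\<And>u x1 x2 x4 x5. u \<in> verts B \<Longrightarrow> distinct [x1, x2, a u, x4, x5] \<Longrightarrow>
               {x1, x2} \<in> edges (A u) \<Longrightarrow> {x2, a u} \<in> edges (A u) \<Longrightarrow>
               {a u, x4} \<in> edges (A u) \<Longrightarrow> {x4, x5} \<in> edges (A u) \<Longrightarrow>
               Gamma (del_verts (A u) {x1, x2, a u, x4, x5}) \<noteq> {}"
begin

abbreviation "VB \<equiv> verts B"
abbreviation "EB \<equiv> edges B"
abbreviation "G \<equiv> compose B A a phi"
abbreviation "VG \<equiv> verts G"
abbreviation "EG \<equiv> edges G"
abbreviation "N u \<equiv> nbrs (A u) (a u)"
abbreviation "al \<equiv> alpha phi"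

lemma cubicB: "cubic B" using comp by (simp add: composition_data_def)
lemma simpleB: "simple_graph B" using cubicB by (simp add: cubic_def)
lemma sB: "simple_edges VB EB" using simple_graph_edges[OF simpleB] .

lemma compu: "u \<in> VB \<Longrightarrow> simple_graph (A u) \<and> a u \<in> verts (A u) \<and> degree (A u) (a u) = 3 \<and>
        bij_betw (phi u) (inc_edges B u) (N u)"
  using comp by (simp add: composition_data_def)

lemma simpleA: "u \<in> VB \<Longrightarrow> simple_graph (A u)" using compu by blast
lemma sA: "u \<in> VB \<Longrightarrow> simple_edges (verts (A u)) (edges (A u))" using simple_graph_edges simpleA by blast

lemma N_card: "u \<in> VB \<Longrightarrow> card (N u) = 3" using compu by (simp add: degree_def)

lemma N_sub: "u \<in> VB \<Longrightarrow> y \<in> N u \<Longrightarrow> y \<in> verts (A u) \<and> y \<noteq> a u \<and> {a u, y} \<in> edges (A u)"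
  using nbrs_in[OF simpleA] by blast

lemma EB_form: "e \<in> EB \<Longrightarrow> u \<in> e \<Longrightarrow> \<exists>v. v \<noteq> u \<and> v \<in> VB \<and> u \<in> VB \<and> e = {u,v}"
  using two_set_ex[OF sB] by blast

lemma EB_VB: "e \<in> EB \<Longrightarrow> u \<in> e \<Longrightarrow> u \<in> VB"
  using EB_form by blast

lemma inc_mem: "e \<in> inc_edges B u \<longleftrightarrow> e \<in> EB \<and> u \<in> e" by (simp add: inc_edges_def)

lemma phi_bij: "u \<in> VB \<Longrightarrow> bij_betw (phi u) (inc_edges B u) (N u)" using compu by blast

lemma phi_inj: "e \<in> EB \<Longrightarrow> e' \<in> EB \<Longrightarrow> u \<in> e \<Longrightarrow> u \<in> e' \<Longrightarrow> phi u e = phi u e' \<Longrightarrow> e = e'"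
proof -
  assume h: "e \<in> EB" "e' \<in> EB" "u \<in> e" "u \<in> e'" "phi u e = phi u e'"
  have "u \<in> VB" using EB_VB h by blast
  then have "inj_on (phi u) (inc_edges B u)" using phi_bij bij_betw_def by blast
  then show "e = e'" using h by (auto simp: inc_mem inj_on_def)
qed

lemma phi_N: "e \<in> EB \<Longrightarrow> u \<in> e \<Longrightarrow> phi u e \<in> N u"
proof -
  assume h: "e \<in> EB" "u \<in> e"
  have "u \<in> VB" using EB_VB h by blast
  then show ?thesis using phi_bij h bij_betwE inc_mem by metis
qed

lemma N_image: "u \<in> VB \<Longrightarrow> phi u ` inc_edges B u = N u"
  using phi_bij bij_betw_imp_surj_on by blast

lemma inc_card: assumes u: "u \<in> VB" shows "card (inc_edges B u) = 3" "finite (inc_edges B u)"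
proof -
  have "card (inc_edges B u) = card (N u)" using phi_bij[OF u] bij_betw_same_card by blast
  then show c: "card (inc_edges B u) = 3" using N_card u by simp
  then show "finite (inc_edges B u)" by (intro card_ge_0_finite) simp
qed

lemma VG_mem: "p \<in> VG \<longleftrightarrow> fst p \<in> VB \<and> snd p \<in> verts (A (fst p)) \<and> snd p \<noteq> a (fst p)"
  by (cases p) (auto simp: compose_def verts_def)

lemma EG_mem: "f \<in> EG \<longleftrightarrow> (\<exists>u\<in>VB. \<exists>e\<in>edges (A u). a u \<notin> e \<and> f = Pair u ` e) \<or> (\<exists>e\<in>EB. f = al e)"
  by (auto simp: compose_def edges_def lift_edges_def del_verts_def)

lemma alpha_edge: assumes "e \<in> EB" shows "\<exists>u v. u \<noteq> v \<and> u \<in> VB \<and> v \<in> VB \<and> e = {u,v} \<and>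
     al e = {(u, phi u e), (v, phi v e)} \<and> (u, phi u e) \<in> VG \<and> (v, phi v e) \<in> VG"
proof -
  obtain u v where uv: "u \<noteq> v" "u \<in> VB" "v \<in> VB" "e = {u,v}" using simple_edgesD[OF sB assms] by blast
  have "phi u e \<in> N u" "phi v e \<in> N v" using phi_N assms uv by auto
  then have "(u, phi u e) \<in> VG" "(v, phi v e) \<in> VG" using N_sub uv by (auto simp: VG_mem)
  then show ?thesis using uv alpha_uv[of phi u v] by blast
qed

lemma EG_cases:
  assumes "f \<in> EG"
  obtains (l) u e where "u \<in> VB" "e \<in> edges (A u)" "a u \<notin> e" "f = Pair u ` e"
    | (al) e where "e \<in> EB" "f = al e"
proof -
  have "f \<in> (\<Union>u\<in>VB. lift_edges u (edges (del_verts (A u) {a u}))) \<or> f \<in> al ` EB"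
    using assms by (simp add: compose_def edges_def)
  then show ?thesis
  proof
    assume "f \<in> (\<Union>u\<in>VB. lift_edges u (edges (del_verts (A u) {a u})))"
    then obtain u e where "u \<in> VB" "e \<in> edges (A u)" "e \<inter> {a u} = {}" "f = Pair u ` e"
      by (auto simp: lift_edges_def)
    then show ?thesis using that(1) by blast
  next
    assume "f \<in> al ` EB"
    then show ?thesis using that(2) by blast
  qed
qed

lemma sG: "simple_edges VG EG"
  unfolding simple_edges_def
proof
  fix f assume "f \<in> EG"
  then show "\<exists>x y. x \<noteq> y \<and> x \<in> VG \<and> y \<in> VG \<and> f = {x, y}"
  proof (cases rule: EG_cases)
    case (l u e)
    obtain x y where xy: "x \<noteq> y" "x \<in> verts (A u)" "y \<in> verts (A u)" "e = {x,y}"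
      using simple_edgesD[OF sA[OF l(1)] l(2)] by blast
    then have "(u,x) \<in> VG" "(u,y) \<in> VG" using l by (auto simp: VG_mem)
    moreover have "f = {(u,x),(u,y)}" using xy(4) l(4) by simp
    moreover have "(u,x) \<noteq> (u,y)" using xy(1) by simp
    ultimately show ?thesis by blast
  next
    case (al e)
    obtain u v where uv: "u \<noteq> v" "al e = {(u, phi u e), (v, phi v e)}" "(u, phi u e) \<in> VG" "(v, phi v e) \<in> VG"
      using alpha_edge[OF al(1)] by blast
    show ?thesis using uv al(2) by (intro exI[of _ "(u, phi u e)"] exI[of _ "(v, phi v e)"]) simp
  qed
qed

lemma EG_VG: "f \<in> EG \<Longrightarrow> p \<in> f \<Longrightarrow> p \<in> VG"
  using simple_edgesD[OF sG] by blast

lemma lift_char: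
  assumes f: "f \<in> EG" and fu: "\<And>p. p \<in> f \<Longrightarrow> fst p = u"
  shows "u \<in> VB \<and> snd ` f \<in> edges (A u) \<and> a u \<notin> snd ` f \<and> f = Pair u ` (snd ` f)"
proof -
  from f show ?thesis
  proof (cases rule: EG_cases)
    case (l w e)
    obtain x y where xy: "x \<noteq> y" "e = {x,y}" using simple_edgesD[OF sA[OF l(1)] l(2)] by blast
    have "(w,x) \<in> f" using l(4) xy(2) by simp
    then have "w = u" using fu by fastforce
    moreover have "snd ` f = e" using l by force
    ultimately show ?thesis using l by simp
  next
    case (al e)
    obtain x y where xy: "x \<noteq> y" "e = {x,y}" using simple_edgesD[OF sB al(1)] by blast
    have "fst ` f = e" using al fst_alpha by metis
    then have "x \<in> fst ` f" "y \<in> fst ` f" using xy by auto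
    then have "x = u" "y = u" using fu by auto
    then have False using xy(1) by simp
    then show ?thesis ..
  qed
qed

lemma cross_char:
  assumes f: "f \<in> EG" and p: "p \<in> f" and q: "q \<in> f" and ne: "fst p \<noteq> fst q"
  shows "\<exists>e\<in>EB. f = al e"
proof -
  from f show ?thesis
  proof (cases rule: EG_cases)
    case l then have False using p q ne by auto
    then show ?thesis ..
  qed blast
qed

end

locale factor = setting +
  fixes Q
  assumes Q: "lambda_factor G Q"
begin

definition "PQ = {e\<in>EB. al e \<in> Q}"
abbreviation "cp x \<equiv> component (VG, Q) x"
definition "S u = {p\<in>VG. fst p = u}"
definition "c u e = card (cp (u, phi u e) \<inter> S u)"

lemma QE: "Q \<subseteq> EG" and Qgood: "good VG Q"
  using Q lf_iff[OF sG] by blast+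

lemma cp_self: "x \<in> VG \<Longrightarrow> x \<in> cp x \<and> closedP3 VG Q (cp x)"
proof -
  assume x: "x \<in> VG"
  obtain C where C: "x \<in> C" "closedP3 VG Q C" using Qgood x unfolding good_def by blast
  have "cp x = C" using closedP3_component[OF C(2) C(1)] .
  then show ?thesis using C by simp
qed

lemma cp_eq: "x \<in> VG \<Longrightarrow> y \<in> cp x \<Longrightarrow> cp y = cp x"
  using cp_self closedP3_component by metis

lemma cp_meet: "x \<in> VG \<Longrightarrow> y \<in> VG \<Longrightarrow> z \<in> cp x \<Longrightarrow> z \<in> cp y \<Longrightarrow> cp x = cp y"
  using cp_eq by metis

lemma cp_edge: "f \<in> Q \<Longrightarrow> x \<in> f \<Longrightarrow> f \<subseteq> cp x"
proof -
  assume f: "f \<in> Q" "x \<in> f"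
  then have x: "x \<in> VG" using QE EG_VG by blast
  have "f \<inter> cp x \<noteq> {}" using f(2) cp_self[OF x] by blast
  then show ?thesis using closedP3_D(3)[OF conjunct2[OF cp_self[OF x]] f(1)] by blast
qed

lemma cp_card: "x \<in> VG \<Longrightarrow> card (cp x) = 3 \<and> finite (cp x)"
  using P3_card closedP3_D(2) cp_self by metis

lemma PQ_EB: "e \<in> PQ \<Longrightarrow> e \<in> EB" and PQ_Q: "e \<in> PQ \<Longrightarrow> al e \<in> Q"
  by (auto simp: PQ_def)

lemma phiVG: "e \<in> EB \<Longrightarrow> u \<in> e \<Longrightarrow> (u, phi u e) \<in> VG"
proof -
  assume h: "e \<in> EB" "u \<in> e"
  then have "u \<in> VB" "phi u e \<in> N u" using EB_VB phi_N by auto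
  then show ?thesis using N_sub by (auto simp: VG_mem)
qed

lemma OE:
  assumes e: "e \<in> EB" and q: "q \<in> al e" and qr: "{q,r} \<in> Q" and r: "r \<notin> al e"
  shows "fst r = fst q \<and> snd r \<noteq> snd q"
proof -
  have f: "{q,r} \<in> EG" using qr QE by blast
  have fr: "fst r = fst q"
  proof (rule ccontr)
    assume "fst r \<noteq> fst q"
    then obtain e'' where e'': "e'' \<in> EB" "{q,r} = al e''" using cross_char[OF f, of q r] by auto
    have "q \<in> al e''" using e'' by auto
    then have "fst q \<in> e''" "snd q = phi (fst q) e''" by (auto simp: alpha_mem)
    moreover have "fst q \<in> e" "snd q = phi (fst q) e" using q by (auto simp: alpha_mem)
    ultimately have "e'' = e" using phi_inj[OF e''(1) e] by simp
    then show False using e'' r by auto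
  qed
  have "q \<noteq> r" using q r by auto
  then have "snd r \<noteq> snd q" using fr by (metis prod.expand)
  then show ?thesis using fr by simp
qed

lemma S_mem: "p \<in> S u \<longleftrightarrow> p \<in> VG \<and> fst p = u" by (simp add: S_def)

lemma SL:
  assumes e: "e \<in> PQ" and uv: "e = {u,v}" "u \<noteq> v"
  shows "(\<exists>y. cp (u, phi u e) = {(u, phi u e), (v, phi v e), (u,y)} \<and> y \<noteq> phi u e \<and> {(u, phi u e), (u,y)} \<in> Q)
       \<or> (\<exists>y. cp (u, phi u e) = {(u, phi u e), (v, phi v e), (v,y)} \<and> y \<noteq> phi v e \<and> {(v, phi v e), (v,y)} \<in> Q)"
proof -
  have eB: "e \<in> EB" using PQ_EB e .
  have aleq: "al e = {(u, phi u e), (v, phi v e)}" using uv alpha_uv[of phi u v] by simp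
  have x0: "(u, phi u e) \<in> VG" using phiVG[OF eB] uv by simp
  let ?D = "cp (u, phi u e)"
  have cl: "closedP3 VG Q ?D" using cp_self[OF x0] by blast
  have aQ: "al e \<in> Q" using PQ_Q e .
  have "al e \<subseteq> ?D" using cp_edge[OF aQ] aleq by simp
  then have aE: "al e \<in> {f\<in>Q. f \<subseteq> ?D}" using aQ by simp
  obtain p q r where pqr: "distinct [p,q,r]" "?D = {p,q,r}" "{f\<in>Q. f \<subseteq> ?D} = {{p,q},{q,r}}" "al e = {p,q}"
    using P3_orient[OF closedP3_D(2)[OF cl] aE] by (elim exE conjE) (rule that; assumption)
  have qr: "{q,r} \<in> Q" using pqr(3) by blast
  have rn: "r \<notin> al e" using pqr(1,4) by auto
  have qa: "q \<in> al e" using pqr(4) by simp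
  have or: "fst r = fst q \<and> snd r \<noteq> snd q" using OE[OF eB qa qr rn] .
  have "(p = (u, phi u e) \<and> q = (v, phi v e)) \<or> (p = (v, phi v e) \<and> q = (u, phi u e))"
    using pqr(4) aleq by (auto simp: doubleton_eq_iff)
  then show ?thesis
  proof
    assume h: "p = (u, phi u e) \<and> q = (v, phi v e)"
    then have rr: "r = (v, snd r)" using or by (metis prod.collapse fst_conv)
    have "?D = {(u, phi u e), (v, phi v e), (v, snd r)}" using pqr(2) h rr by simp
    moreover have "snd r \<noteq> phi v e" using or h by simp
    moreover have "{(v, phi v e), (v, snd r)} \<in> Q" using qr h rr by simp
    ultimately show ?thesis by blast
  next
    assume h: "p = (v, phi v e) \<and> q = (u, phi u e)"
    then have rr: "r = (u, snd r)" using or by (metis prod.collapse fst_conv)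
    have "?D = {(u, phi u e), (v, phi v e), (u, snd r)}" using pqr(2) h rr by auto
    moreover have "snd r \<noteq> phi u e" using or h by simp
    moreover have "{(u, phi u e), (u, snd r)} \<in> Q" using qr h rr by simp
    ultimately show ?thesis by blast
  qed
qed

lemma cp_other: assumes e: "e \<in> PQ" and uv: "e = {u,v}" shows "cp (v, phi v e) = cp (u, phi u e)"
proof -
  have eB: "e \<in> EB" using PQ_EB e .
  have aleq: "al e = {(u, phi u e), (v, phi v e)}" using uv alpha_uv[of phi u v] by simp
  have x0: "(u, phi u e) \<in> VG" using phiVG[OF eB] uv by simp
  have "al e \<subseteq> cp (u, phi u e)" using cp_edge[OF PQ_Q[OF e]] aleq by simp
  then have "(v, phi v e) \<in> cp (u, phi u e)" using aleq by simp
  then show ?thesis using cp_eq[OF x0] by simp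
qed

lemma SL3:
  assumes e: "e \<in> PQ" and uv: "e = {u,v}" "u \<noteq> v"
  shows "(\<exists>y. cp (u, phi u e) \<inter> S u = {(u, phi u e), (u,y)} \<and> y \<noteq> phi u e \<and> {(u, phi u e), (u,y)} \<in> Q
             \<and> c u e = 2 \<and> c v e = 1 \<and> cp (u, phi u e) = {(u, phi u e), (v, phi v e), (u,y)})
       \<or> (cp (u, phi u e) \<inter> S u = {(u, phi u e)} \<and> c u e = 1 \<and> c v e = 2)"
proof -
  have eB: "e \<in> EB" using PQ_EB e .
  have x0: "(u, phi u e) \<in> VG" "(v, phi v e) \<in> VG" using phiVG[OF eB] uv by auto
  have cpv: "cp (v, phi v e) = cp (u, phi u e)" using cp_other[OF e uv(1)] .
  have inVG: "\<And>p q. {p,q} \<in> Q \<Longrightarrow> q \<in> VG" using QE EG_VG by blast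
  from SL[OF e uv] show ?thesis
  proof
    assume "\<exists>y. cp (u, phi u e) = {(u, phi u e), (v, phi v e), (u,y)} \<and> y \<noteq> phi u e \<and> {(u, phi u e), (u,y)} \<in> Q"
    then obtain y where y: "cp (u, phi u e) = {(u, phi u e), (v, phi v e), (u,y)}" "y \<noteq> phi u e" "{(u, phi u e), (u,y)} \<in> Q"
      by blast
    have yV: "(u,y) \<in> VG" using inVG[OF y(3)] .
    have s1: "cp (u, phi u e) \<inter> S u = {(u, phi u e), (u,y)}" using y(1) x0 yV uv(2) by (auto simp: S_mem)
    have s2: "cp (v, phi v e) \<inter> S v = {(v, phi v e)}" using cpv y(1) x0 yV uv(2) by (auto simp: S_mem)
    have "c u e = 2" using s1 y(2) by (simp add: c_def)
    moreover have "c v e = 1" using s2 by (simp add: c_def)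
    ultimately show ?thesis using s1 y by (intro disjI1 exI[of _ y]) simp
  next
    assume "\<exists>y. cp (u, phi u e) = {(u, phi u e), (v, phi v e), (v,y)} \<and> y \<noteq> phi v e \<and> {(v, phi v e), (v,y)} \<in> Q"
    then obtain y where y: "cp (u, phi u e) = {(u, phi u e), (v, phi v e), (v,y)}" "y \<noteq> phi v e" "{(v, phi v e), (v,y)} \<in> Q"
      by blast
    have yV: "(v,y) \<in> VG" using inVG[OF y(3)] .
    have s1: "cp (u, phi u e) \<inter> S u = {(u, phi u e)}" using y(1) x0 yV uv(2) by (auto simp: S_mem)
    have s2: "cp (v, phi v e) \<inter> S v = {(v, phi v e), (v,y)}" using cpv y(1) x0 yV uv(2) by (auto simp: S_mem)
    have "c u e = 1" using s1 by (simp add: c_def)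
    moreover have "c v e = 2" using s2 y(2) by (simp add: c_def)
    ultimately show ?thesis using s1 by blast
  qed
qed

lemma DD:
  assumes e: "e \<in> PQ" "e' \<in> PQ" "u \<in> e" "u \<in> e'" "e \<noteq> e'"
  shows "cp (u, phi u e) \<inter> cp (u, phi u e') = {}"
proof (rule ccontr)
  assume ne: "cp (u, phi u e) \<inter> cp (u, phi u e') \<noteq> {}"
  have eB: "e \<in> EB" "e' \<in> EB" using PQ_EB e by auto
  have x0: "(u, phi u e) \<in> VG" "(u, phi u e') \<in> VG" using phiVG eB e by auto
  have eq: "cp (u, phi u e) = cp (u, phi u e')" using ne cp_meet[OF x0] by blast
  obtain v where v: "v \<noteq> u" "e = {u,v}" using EB_form[OF eB(1) e(3)] by blast
  obtain v' where v': "v' \<noteq> u" "e' = {u,v'}" using EB_form[OF eB(2) e(4)] by blast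
  have vv: "v \<noteq> v'" using v v' e(5) by auto
  have pp: "phi u e \<noteq> phi u e'" using phi_inj[OF eB e(3,4)] e(5) by blast
  have m: "(u, phi u e) \<in> al e" "(u, phi u e') \<in> al e'" using e(3,4) by (auto simp: alpha_mem)
  have "al e \<subseteq> cp (u, phi u e)" "al e' \<subseteq> cp (u, phi u e')"
    using cp_edge[OF PQ_Q[OF e(1)] m(1)] cp_edge[OF PQ_Q[OF e(2)] m(2)] by auto
  then have sub: "{(u, phi u e), (v, phi v e), (u, phi u e'), (v', phi v' e')} \<subseteq> cp (u, phi u e)"
    using eq v v' by (auto simp: alpha_mem)
  have "card {(u, phi u e), (v, phi v e), (u, phi u e'), (v', phi v' e')} = 4"
    using v v' vv pp by auto
  moreover have "card (cp (u, phi u e)) = 3 \<and> finite (cp (u, phi u e))" using cp_card x0 by blast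
  ultimately show False using card_mono[OF _ sub] by simp
qed

end

lemma arith3: "(3*k + p + m) mod 3 = (1::nat) \<Longrightarrow> m \<le> p \<Longrightarrow> p \<le> 3 \<Longrightarrow>
   (p = 1 \<and> m = 0) \<or> (p = 2 \<and> m = 2) \<or> (p = 3 \<and> m = 1)"
  by presburger

context factor begin

definition "R u = S u - (\<Union>e\<in>Pat PQ u. cp (u, phi u e))"

lemma Pat_mem: "e \<in> Pat PQ u \<longleftrightarrow> e \<in> PQ \<and> u \<in> e" by (simp add: Pat_def)

lemma S_eq: "u \<in> VB \<Longrightarrow> S u = Pair u ` (verts (A u) - {a u})"
  by (auto simp: S_mem VG_mem)

lemma S_fin: "u \<in> VB \<Longrightarrow> finite (S u) \<and> card (S u) mod 3 = 1"
proof -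
  assume u: "u \<in> VB"
  have fin: "finite (verts (A u))" using simpleA[OF u] by (simp add: simple_graph_def)
  have au: "a u \<in> verts (A u)" using compu[OF u] by blast
  have "card (S u) = card (verts (A u) - {a u})" using S_eq[OF u] by (simp add: card_image inj_on_def)
  also have "\<dots> = card (verts (A u)) - 1" using au fin by simp
  finally have "card (S u) = card (verts (A u)) - 1" .
  moreover have "card (verts (A u)) mod 6 = 2" using mod6 u .
  moreover have "card (verts (A u)) = 6 * (card (verts (A u)) div 6) + card (verts (A u)) mod 6" by simp
  ultimately have "card (S u) = 6 * (card (verts (A u)) div 6) + 1" by simp
  moreover have "\<forall>q::nat. (6*q+1) mod 3 = 1" by presburger
  ultimately have "card (S u) mod 3 = 1" by metis
  then show ?thesis using S_eq[OF u] fin by simp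
qed

lemma Pat_fin: "u \<in> VB \<Longrightarrow> finite (Pat PQ u) \<and> card (Pat PQ u) \<le> 3"
proof -
  assume u: "u \<in> VB"
  have "Pat PQ u \<subseteq> inc_edges B u" by (auto simp: Pat_def inc_mem PQ_def)
  then show ?thesis using inc_card[OF u] card_mono finite_subset by metis
qed

lemma R1:
  assumes u: "u \<in> VB" and x: "x \<in> R u"
  shows "cp x \<subseteq> R u"
proof -
  have xS: "x \<in> S u" and xn: "\<And>e. e \<in> Pat PQ u \<Longrightarrow> x \<notin> cp (u, phi u e)" using x by (auto simp: R_def)
  have xV: "x \<in> VG" using xS by (simp add: S_mem)
  have eV: "\<And>e. e \<in> Pat PQ u \<Longrightarrow> (u, phi u e) \<in> VG" using phiVG PQ_EB by (auto simp: Pat_mem)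
  have disj: "cp x \<inter> cp (u, phi u e) = {}" if e: "e \<in> Pat PQ u" for e
  proof (rule ccontr)
    assume "cp x \<inter> cp (u, phi u e) \<noteq> {}"
    then have "cp x = cp (u, phi u e)" using cp_meet[OF xV eV[OF e]] by blast
    then show False using cp_self[OF xV] xn[OF e] by simp
  qed
  have sub: "cp x \<subseteq> S u"
  proof (rule ccontr)
    assume ns: "\<not> cp x \<subseteq> S u"
    have p3: "is_P3 (cp x) {f\<in>Q. f \<subseteq> cp x}" using closedP3_D(2) cp_self[OF xV] by blast
    obtain f where f: "f \<in> {f\<in>Q. f \<subseteq> cp x}" "f \<inter> S u \<noteq> {}" "\<not> f \<subseteq> S u"
      using P3_cross[OF p3 _ xS ns] cp_self[OF xV] by blast
    obtain p where p: "p \<in> f" "p \<in> S u" using f(2) by blast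
    obtain q where q: "q \<in> f" "q \<notin> S u" using f(3) by blast
    have fE: "f \<in> EG" using f(1) QE by blast
    have "q \<in> VG" using EG_VG[OF fE q(1)] .
    then have "fst q \<noteq> fst p" using p(2) q(2) by (auto simp: S_mem)
    then obtain e where e: "e \<in> EB" "f = al e" using cross_char[OF fE p(1) q(1)] by metis
    have pe: "fst p \<in> e" "snd p = phi (fst p) e" using p(1) e(2) by (auto simp: alpha_mem)
    have "fst p = u" using p(2) by (simp add: S_mem)
    then have pp: "p = (u, phi u e)" using pe by (metis prod.collapse)
    have eP: "e \<in> Pat PQ u" using e f(1) pe \<open>fst p = u\<close> by (auto simp: Pat_def PQ_def)
    have "p \<in> cp x" using f(1) p(1) by blast
    moreover have "p \<in> cp (u, phi u e)" using pp cp_self eV[OF eP] by blast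
    ultimately show False using disj[OF eP] by blast
  qed
  show ?thesis using sub disj unfolding R_def by blast
qed

lemma R_dvd: assumes u: "u \<in> VB" shows "3 dvd card (R u)" "finite (R u)"
proof -
  have finR: "finite (R u)" using S_fin[OF u] by (simp add: R_def)
  have xV: "\<And>x. x \<in> R u \<Longrightarrow> x \<in> VG" by (simp add: R_def S_mem)
  have U: "R u = \<Union>(cp ` R u)"
  proof
    show "R u \<subseteq> \<Union>(cp ` R u)" using cp_self xV by blast
    show "\<Union>(cp ` R u) \<subseteq> R u" using R1[OF u] by blast
  qed
  have pw: "pairwise disjnt (cp ` R u)"
    unfolding pairwise_def disjnt_def
  proof (intro ballI impI)
    fix X Y assume X: "X \<in> cp ` R u" and Y: "Y \<in> cp ` R u" and ne: "X \<noteq> Y"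
    obtain x y where "x \<in> R u" "y \<in> R u" "X = cp x" "Y = cp y" using X Y by blast
    then show "X \<inter> Y = {}" using cp_meet xV ne by blast
  qed
  have "card (R u) = sum card (cp ` R u)"
    using card_Union_disjoint[OF pw] U cp_card xV by (metis (no_types, lifting) imageE)
  also have "\<dots> = sum (\<lambda>_. 3) (cp ` R u)"
    by (rule sum.cong) (use cp_card xV in auto)
  also have "\<dots> = 3 * card (cp ` R u)" by simp
  finally show "3 dvd card (R u)" by simp
  show "finite (R u)" using finR .
qed

lemma c12: assumes e: "e \<in> Pat PQ u" shows "c u e = 1 \<or> c u e = 2"
proof -
  have eP: "e \<in> PQ" "u \<in> e" using e by (auto simp: Pat_mem)
  obtain v where v: "v \<noteq> u" "e = {u,v}" using EB_form[OF PQ_EB[OF eP(1)] eP(2)] by blast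
  show ?thesis using SL3[OF eP(1) v(2)] v(1) by auto
qed

lemma count:
  assumes u: "u \<in> VB"
  shows "card (S u) = card (R u) + card (Pat PQ u) + card {e\<in>Pat PQ u. c u e = 2}"
proof -
  let ?P = "Pat PQ u"
  let ?X = "\<lambda>e. cp (u, phi u e) \<inter> S u"
  have finP: "finite ?P" using Pat_fin[OF u] by blast
  have finS: "finite (S u)" using S_fin[OF u] by blast
  have split: "S u = R u \<union> (\<Union>e\<in>?P. ?X e)" by (auto simp: R_def)
  have dj: "R u \<inter> (\<Union>e\<in>?P. ?X e) = {}" by (auto simp: R_def)
  have c1: "card (S u) = card (R u) + card (\<Union>e\<in>?P. ?X e)"
    using card_Un_disjoint[of "R u" "\<Union>e\<in>?P. ?X e"] split dj finS
    by (metis finite_Un)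
  have c2: "card (\<Union>e\<in>?P. ?X e) = (\<Sum>e\<in>?P. c u e)"
  proof -
    have "card (\<Union>e\<in>?P. ?X e) = (\<Sum>e\<in>?P. card (?X e))"
    proof (rule card_UN_disjoint[OF finP])
      show "\<forall>i\<in>?P. finite (?X i)" using finS by blast
      show "\<forall>i\<in>?P. \<forall>j\<in>?P. i \<noteq> j \<longrightarrow> ?X i \<inter> ?X j = {}"
      proof (intro ballI impI)
        fix i j assume "i \<in> ?P" "j \<in> ?P" "i \<noteq> j"
        then have "cp (u, phi u i) \<inter> cp (u, phi u j) = {}" using DD by (simp add: Pat_mem)
        then show "?X i \<inter> ?X j = {}" by blast
      qed
    qed
    then show ?thesis by (simp add: c_def)
  qed
  let ?X2 = "{e\<in>?P. c u e = 2}" and ?X1 = "{e\<in>?P. c u e \<noteq> 2}"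
  have un: "?P = ?X1 \<union> ?X2" by auto
  have d12: "?X1 \<inter> ?X2 = {}" by auto
  have f12: "finite ?X1" "finite ?X2" using finP by auto
  have h: "sum (c u) (?X1 \<union> ?X2) = sum (c u) ?X1 + sum (c u) ?X2" by (rule sum.union_disjoint[OF f12 d12])
  have "(\<Sum>e\<in>?P. c u e) = (\<Sum>e\<in>?X1. c u e) + (\<Sum>e\<in>?X2. c u e)"
    using h by (simp only: un[symmetric])
  also have "(\<Sum>e\<in>?X1. c u e) = (\<Sum>e\<in>?X1. 1)" by (rule sum.cong) (use c12 in auto)
  also have "(\<Sum>e\<in>?X2. c u e) = (\<Sum>e\<in>?X2. 2)" by (rule sum.cong) auto
  finally have "(\<Sum>e\<in>?P. c u e) = card ?X1 + 2 * card ?X2" by simp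
  moreover have "card ?P = card ?X1 + card ?X2" using card_Un_disjoint[OF f12 d12] un by simp
  ultimately show ?thesis using c1 c2 by simp
qed

lemma classify:
  assumes u: "u \<in> VB"
  shows "(card (Pat PQ u) = 1 \<and> (\<forall>e\<in>Pat PQ u. c u e = 1))
       \<or> (card (Pat PQ u) = 2 \<and> (\<forall>e\<in>Pat PQ u. c u e = 2))
       \<or> (card (Pat PQ u) = 3 \<and> card {e\<in>Pat PQ u. c u e = 2} = 1)"
proof -
  let ?m = "card {e\<in>Pat PQ u. c u e = 2}"
  have le: "?m \<le> card (Pat PQ u)" using Pat_fin[OF u] by (intro card_mono) auto
  have c3: "card (Pat PQ u) \<le> 3" using Pat_fin[OF u] by blast
  obtain k where k: "card (R u) = 3 * k" using R_dvd[OF u] by blast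
  have "card (S u) mod 3 = 1" using S_fin[OF u] by blast
  then have ar: "(3*k + card (Pat PQ u) + ?m) mod 3 = 1" using count[OF u] k by simp
  have cases: "(card (Pat PQ u) = 1 \<and> ?m = 0) \<or> (card (Pat PQ u) = 2 \<and> ?m = 2) \<or> (card (Pat PQ u) = 3 \<and> ?m = 1)"
    using arith3[OF ar le c3] .
  have finP: "finite (Pat PQ u)" using Pat_fin[OF u] by blast
  show ?thesis
  proof -
    { assume h: "card (Pat PQ u) = 1 \<and> ?m = 0"
      then have "{e\<in>Pat PQ u. c u e = 2} = {}" using finP by simp
      then have "\<forall>e\<in>Pat PQ u. c u e = 1" using c12 by blast
      then have ?thesis using h by blast }
    moreover
    { assume h: "card (Pat PQ u) = 2 \<and> ?m = 2"
      then have "{e\<in>Pat PQ u. c u e = 2} = Pat PQ u"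
        using finP by (metis (no_types, lifting) card_subset_eq mem_Collect_eq subsetI)
      then have "\<forall>e\<in>Pat PQ u. c u e = 2" by blast
      then have ?thesis using h by blast }
    ultimately show ?thesis using cases by blast
  qed
qed

end

context factor begin

lemma no3: assumes u: "u \<in> VB" shows "card (Pat PQ u) \<noteq> 3"
proof
  assume c3: "card (Pat PQ u) = 3"
  let ?P = "Pat PQ u"
  have m1: "card {e\<in>?P. c u e = 2} = 1" using classify[OF u] c3 by auto
  have finP: "finite ?P" using Pat_fin[OF u] by blast
  have Pinc: "?P = inc_edges B u"
  proof -
    have "?P \<subseteq> inc_edges B u" by (auto simp: Pat_def inc_mem PQ_def)
    then show ?thesis using card_subset_eq[OF inc_card(2)[OF u]] inc_card(1)[OF u] c3 by simp
  qed
  have NP: "phi u ` ?P = N u" using N_image[OF u] Pinc by simp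
  obtain e3 where e3s: "{e\<in>?P. c u e = 2} = {e3}" using m1 by (meson card_1_singletonE)
  have e3: "e3 \<in> ?P" "c u e3 = 2" using e3s by auto
  have oth: "\<And>e. e \<in> ?P \<Longrightarrow> e \<noteq> e3 \<Longrightarrow> c u e = 1" using e3s c12 by blast
  have eP: "\<And>e. e \<in> ?P \<Longrightarrow> e \<in> PQ \<and> u \<in> e" by (simp add: Pat_mem)
  have eV: "\<And>e. e \<in> ?P \<Longrightarrow> (u, phi u e) \<in> VG" using phiVG PQ_EB eP by blast
  obtain v3 where v3: "v3 \<noteq> u" "e3 = {u,v3}" using EB_form[OF PQ_EB] eP[OF e3(1)] by blast
  obtain y where y: "cp (u, phi u e3) \<inter> S u = {(u, phi u e3), (u,y)}" "y \<noteq> phi u e3"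
      "{(u, phi u e3), (u,y)} \<in> Q"
    using SL3[OF conjunct1[OF eP[OF e3(1)]] v3(2) v3(1)[symmetric]] e3(2) by auto
  have one: "cp (u, phi u e) \<inter> S u = {(u, phi u e)}" if e: "e \<in> ?P" "e \<noteq> e3" for e
  proof -
    obtain v where v: "v \<noteq> u" "e = {u,v}" using EB_form[OF PQ_EB] eP[OF e(1)] by blast
    show ?thesis using SL3[OF conjunct1[OF eP[OF e(1)]] v(2) v(1)[symmetric]] oth[OF e] by auto
  qed
  have Ueq: "(\<Union>e\<in>?P. cp (u, phi u e) \<inter> S u) = Pair u ` (N u \<union> {y})"
  proof
    show "(\<Union>e\<in>?P. cp (u, phi u e) \<inter> S u) \<subseteq> Pair u ` (N u \<union> {y})"
    proof
      fix p assume "p \<in> (\<Union>e\<in>?P. cp (u, phi u e) \<inter> S u)"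
      then obtain e where e: "e \<in> ?P" "p \<in> cp (u, phi u e) \<inter> S u" by blast
      show "p \<in> Pair u ` (N u \<union> {y})"
      proof (cases "e = e3")
        case True then show ?thesis using e y(1) NP e3(1) by auto
      next
        case False then show ?thesis using e one NP by auto
      qed
    qed
    show "Pair u ` (N u \<union> {y}) \<subseteq> (\<Union>e\<in>?P. cp (u, phi u e) \<inter> S u)"
    proof
      fix p assume "p \<in> Pair u ` (N u \<union> {y})"
      then consider "p = (u,y)" | n where "n \<in> N u" "p = (u,n)" by blast
      then show "p \<in> (\<Union>e\<in>?P. cp (u, phi u e) \<inter> S u)"
      proof cases
        case 1 then show ?thesis using y(1) e3(1) by blast
      next
        case 2
        then obtain e where e: "e \<in> ?P" "n = phi u e" using NP by blast
        have "(u, phi u e) \<in> cp (u, phi u e)" using cp_self eV[OF e(1)] by blast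
        moreover have "(u, phi u e) \<in> S u" using eV[OF e(1)] by (simp add: S_mem)
        ultimately show ?thesis using e 2 by blast
      qed
    qed
  qed
  have Req: "R u = S u - Pair u ` (N u \<union> {y})"
    using Ueq unfolding R_def by blast
  have fE: "{(u, phi u e3), (u,y)} \<in> EG" using y(3) QE by blast
  have lc: "snd ` {(u, phi u e3), (u,y)} \<in> edges (A u) \<and> a u \<notin> snd ` {(u, phi u e3), (u,y)}"
  proof -
    have "\<And>p. p \<in> {(u, phi u e3), (u,y)} \<Longrightarrow> fst p = u" by auto
    then show ?thesis using lift_char[OF fE, of u] by blast
  qed
  then have yE: "{phi u e3, y} \<in> edges (A u)" "y \<noteq> a u" by auto
  have yV: "y \<in> verts (A u)" using simple_edgesD[OF sA[OF u] yE(1)] by (auto simp: doubleton_eq_iff)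
  have yN: "y \<notin> N u"
  proof
    assume "y \<in> N u"
    then obtain e' where e': "e' \<in> ?P" "y = phi u e'" using NP by blast
    have "(u,y) \<in> cp (u, phi u e')" using cp_self eV[OF e'(1)] e'(2) by blast
    moreover have "(u,y) \<in> cp (u, phi u e3)" using y(1) by blast
    ultimately have "e' = e3" using DD eP[OF e'(1)] eP[OF e3(1)] by blast
    then show False using e'(2) y(2) by simp
  qed
  have adjy: "\<exists>n\<in>N u. adj (A u) y n"
  proof -
    have "phi u e3 \<in> N u" using NP e3(1) by blast
    moreover have "adj (A u) y (phi u e3)" using yE(1) by (simp add: adj_def insert_commute)
    ultimately show ?thesis by blast
  qed
  have G0: "Gamma (del_verts (A u) (N u \<union> {a u, y})) = {}"
    using h1[OF u _ adjy] yV yE(2) yN by blast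
  have gR: "good (R u) {f\<in>Q. f \<subseteq> R u}"
  proof (rule good_restrict)
    fix x assume x: "x \<in> R u"
    have xV: "x \<in> VG" using x by (simp add: R_def S_mem)
    show "\<exists>C. x \<in> C \<and> C \<subseteq> R u \<and> closedP3 VG Q C"
      using cp_self[OF xV] R1[OF u x] by blast
  qed
  have RS: "R u \<subseteq> S u" by (auto simp: R_def)
  have inj: "inj_on snd (S u)" by (auto simp: inj_on_def S_mem prod_eq_iff)
  have gM: "good (snd ` R u) ((`) snd ` {f\<in>Q. f \<subseteq> R u})"
    using good_map[OF inj RS _ gR] RS by blast
  have sR: "snd ` R u = verts (A u) - (N u \<union> {a u, y})"
  proof -
    have "R u = Pair u ` (verts (A u) - {a u} - (N u \<union> {y}))" using Req S_eq[OF u] by auto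
    then show ?thesis by (auto simp: image_image)
  qed
  have FE: "(`) snd ` {f\<in>Q. f \<subseteq> R u} \<subseteq> edges (del_verts (A u) (N u \<union> {a u, y}))"
  proof
    fix f' assume "f' \<in> (`) snd ` {f\<in>Q. f \<subseteq> R u}"
    then obtain f where f: "f \<in> Q" "f \<subseteq> R u" "f' = snd ` f" by blast
    have "f \<in> EG" using f(1) QE by blast
    moreover have "\<And>p. p \<in> f \<Longrightarrow> fst p = u" using f(2) RS by (auto simp: S_mem)
    ultimately have "snd ` f \<in> edges (A u)" using lift_char by blast
    moreover have "snd ` f \<subseteq> snd ` R u" using f(2) by blast
    ultimately show "f' \<in> edges (del_verts (A u) (N u \<union> {a u, y}))" using f(3) sR by auto
  qed
  have "lambda_factor (del_verts (A u) (N u \<union> {a u, y})) ((`) snd ` {f\<in>Q. f \<subseteq> R u})"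
    using lf_iff[OF simple_del[OF simpleA[OF u]]] FE gM sR by simp
  then show False using G0 by (simp add: Gamma_def)
qed

lemma PQ_gamma: "PQ \<in> Gamma B"
proof -
  have c12B: "card (Pat PQ u) = 1 \<or> card (Pat PQ u) = 2" if u: "u \<in> VB" for u
    using classify[OF u] no3[OF u] by auto
  have alt: "card (Pat PQ u) = 2 \<longleftrightarrow> card (Pat PQ v) = 1"
    if e: "e \<in> PQ" "u \<in> e" "v \<in> e" "u \<noteq> v" for e u v
  proof -
    obtain w where w: "w \<noteq> u" "e = {u,w}" "u \<in> VB" "w \<in> VB" using EB_form[OF PQ_EB[OF e(1)] e(2)] by blast
    have vw: "v = w" using w e by auto
    have eu: "e \<in> Pat PQ u" "e \<in> Pat PQ v" using e by (auto simp: Pat_mem)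
    have sl: "(c u e = 2 \<and> c v e = 1) \<or> (c u e = 1 \<and> c v e = 2)"
      using SL3[OF e(1) w(2) w(1)[symmetric]] vw by auto
    have cu: "card (Pat PQ u) = 1 \<and> c u e = 1 \<or> card (Pat PQ u) = 2 \<and> c u e = 2"
      using classify[OF w(3)] no3[OF w(3)] eu(1) by auto
    have cv: "card (Pat PQ v) = 1 \<and> c v e = 1 \<or> card (Pat PQ v) = 2 \<and> c v e = 2"
      using classify[OF w(4)] no3[OF w(4)] eu(2) vw by auto
    show ?thesis using sl cu cv by auto
  qed
  have "good VB PQ" using Bfac1[OF sB _ c12B alt] by (auto simp: PQ_def)
  moreover have "PQ \<subseteq> EB" by (auto simp: PQ_def)
  ultimately show ?thesis using lf_iff[OF sB] by (simp add: Gamma_def)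
qed

end

context setting begin

lemma gamma3: assumes "Q \<in> Gamma G" shows "\<exists>!P. P \<in> Gamma B \<and> Q \<in> GammaGP B A a phi P"
proof -
  interpret factor B A a phi Q
    using assms by unfold_locales (simp add: Gamma_def)
  show ?thesis
  proof
    show "PQ \<in> Gamma B \<and> Q \<in> GammaGP B A a phi PQ"
      using PQ_gamma Q by (simp add: GammaGP_def PQ_def)
    fix P assume "P \<in> Gamma B \<and> Q \<in> GammaGP B A a phi P"
    then show "P = PQ" by (simp add: GammaGP_def PQ_def)
  qed
qed

end

lemma verts_pair[simp]: "verts (X,Y) = X" and edges_pair[simp]: "edges (X,Y) = Y"
  by (simp_all add: verts_def edges_def)

locale withP = setting +
  fixes P
  assumes P: "P \<in> Gamma B"
begin

abbreviation "H u \<equiv> Hgraph B A a phi P u"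
definition "cen u \<longleftrightarrow> card (Pat P u) = 2"
definition "eu u = (THE e. e \<in> Pat P u)"
definition "oth u e = (THE v. v \<in> e \<and> v \<noteq> u)"
definition "own p = (if \<not> cen (fst p) \<and> snd p = phi (fst p) (eu (fst p)) then oth (fst p) (eu (fst p)) else fst p)"

lemma phiVG: "e \<in> EB \<Longrightarrow> u \<in> e \<Longrightarrow> (u, phi u e) \<in> VG"
proof -
  assume h: "e \<in> EB" "u \<in> e"
  then have "u \<in> VB" "phi u e \<in> N u" using EB_VB phi_N by auto
  then show ?thesis using N_sub by (auto simp: VG_mem)
qed

lemma PE: "P \<subseteq> EB" and Pgood: "good VB P"
  using P lf_iff[OF sB] by (auto simp: Gamma_def)

lemma Pat_memP: "e \<in> Pat P u \<longleftrightarrow> e \<in> P \<and> u \<in> e" by (simp add: Pat_def)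

lemma card12: "u \<in> VB \<Longrightarrow> card (Pat P u) = 1 \<or> card (Pat P u) = 2"
  using Bfac2(1)[OF sB PE Pgood] by blast

lemma altP: "e \<in> P \<Longrightarrow> u \<in> e \<Longrightarrow> v \<in> e \<Longrightarrow> u \<noteq> v \<Longrightarrow> (cen u \<longleftrightarrow> \<not> cen v)"
proof -
  assume h: "e \<in> P" "u \<in> e" "v \<in> e" "u \<noteq> v"
  have uv: "u \<in> VB" "v \<in> VB" using h PE EB_VB by auto
  have "card (Pat P u) = 2 \<longleftrightarrow> card (Pat P v) = 1" using Bfac2(2)[OF sB PE Pgood uv(1) h] .
  then show ?thesis using card12[OF uv(2)] by (auto simp: cen_def)
qed

lemma oth_eq: "e \<in> EB \<Longrightarrow> e = {u,v} \<Longrightarrow> u \<noteq> v \<Longrightarrow> oth u e = v"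
  unfolding oth_def by (rule the_equality) auto

lemma eu_end: assumes u: "u \<in> VB" "\<not> cen u" shows "Pat P u = {eu u}" "eu u \<in> P" "u \<in> eu u"
proof -
  have "card (Pat P u) = 1" using card12[OF u(1)] u(2) by (auto simp: cen_def)
  then obtain e where e: "Pat P u = {e}" by (meson card_1_singletonE)
  then have "eu u = e" by (simp add: eu_def)
  then show "Pat P u = {eu u}" using e by simp
  then show "eu u \<in> P" "u \<in> eu u" by (auto simp: Pat_memP)
qed

lemma end_edge: assumes u: "u \<in> VB" "\<not> cen u"
  obtains v where "v \<noteq> u" "v \<in> VB" "eu u = {u,v}" "oth u (eu u) = v" "cen v" "Pat P v \<supseteq> {eu u}"
proof -
  have e: "eu u \<in> P" "u \<in> eu u" using eu_end[OF u] by auto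
  obtain v where v: "v \<noteq> u" "v \<in> VB" "eu u = {u,v}" using EB_form[of "eu u" u] e PE by blast
  have "oth u (eu u) = v" using oth_eq v e PE by blast
  moreover have "cen v" using altP[OF e(1) e(2), of v] v u(2) by auto
  moreover have "Pat P v \<supseteq> {eu u}" using e v by (auto simp: Pat_memP)
  ultimately show ?thesis using that v by blast
qed

lemma H_cen: "cen u \<Longrightarrow> H u = ({u} \<times> (verts (A u) - {a u}) \<union> \<Union>(al ` Pat P u),
     lift_edges u {e\<in>edges (A u). e \<inter> {a u} = {}} \<union> al ` Pat P u)"
  by (simp add: Hgraph_def Let_def Pat_def cen_def)

lemma H_end: "\<not> cen u \<Longrightarrow> H u = ({u} \<times> (verts (A u) - {a u} - {phi u (eu u)}),
     lift_edges u {e\<in>edges (A u). e \<inter> {a u} = {} \<and> e \<inter> {phi u (eu u)} = {}})"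
  by (simp add: Hgraph_def Let_def Pat_def cen_def eu_def)

lemma own_std: "\<not> (\<not> cen (fst p) \<and> snd p = phi (fst p) (eu (fst p))) \<Longrightarrow> own p = fst p"
  unfolding own_def by (rule if_not_P)

lemma own_spec: "\<not> cen (fst p) \<and> snd p = phi (fst p) (eu (fst p)) \<Longrightarrow> own p = oth (fst p) (eu (fst p))"
  unfolding own_def by (rule if_P)

lemma own_VB: "p \<in> VG \<Longrightarrow> own p \<in> VB"
proof -
  assume p: "p \<in> VG"
  then have w: "fst p \<in> VB" by (simp add: VG_mem)
  show ?thesis
  proof (cases "\<not> cen (fst p) \<and> snd p = phi (fst p) (eu (fst p))")
    case True
    obtain v where "v \<in> VB" "oth (fst p) (eu (fst p)) = v" using end_edge[OF w] True by metis
    then show ?thesis using True by (simp add: own_def)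
  next
    case False
    then have "own p = fst p" unfolding own_def by argo
    then show ?thesis using w by simp
  qed
qed

lemma VH_own: assumes u: "u \<in> VB" shows "verts (H u) = {p\<in>VG. own p = u}"
proof (cases "cen u")
  case True
  have VHe: "verts (H u) = {u} \<times> (verts (A u) - {a u}) \<union> \<Union>(al ` Pat P u)" using H_cen[OF True] by simp
  show ?thesis
  proof
    show "verts (H u) \<subseteq> {p\<in>VG. own p = u}"
    proof
      fix p assume "p \<in> verts (H u)"
      then consider "p \<in> {u} \<times> (verts (A u) - {a u})" | e where "e \<in> Pat P u" "p \<in> al e" using VHe by blast
      then show "p \<in> {p\<in>VG. own p = u}"
      proof cases
        case 1 then show ?thesis using u True by (auto simp: VG_mem own_def)
      next
        case 2
        have e: "e \<in> P" "u \<in> e" using 2 by (auto simp: Pat_memP)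
        have eB: "e \<in> EB" using e PE by blast
        obtain v where v: "v \<noteq> u" "e = {u,v}" using EB_form[OF eB e(2)] by blast
        have pV: "p \<in> VG" using 2(2) phiVG[OF eB, of "fst p"] by (cases p) (auto simp: alpha_mem)
        show ?thesis
        proof (cases "fst p = u")
          case True
          then show ?thesis using pV \<open>cen u\<close> by (simp add: own_def)
        next
          case False
          then have fp: "fst p = v" "snd p = phi v e" using 2(2) v by (auto simp: alpha_mem)
          have vB: "v \<in> VB" using EB_VB eB v by auto
          have ncv: "\<not> cen v" using altP[OF e(1) e(2), of v] v True by auto
          have "e \<in> Pat P v" using e v by (auto simp: Pat_memP)
          then have "eu v = e" using eu_end[OF vB ncv] by simp
          then have "own p = oth v e" using fp ncv by (simp add: own_def)
          also have "\<dots> = u" using oth_eq[OF eB, of v u] v by (simp add: insert_commute)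
          finally show ?thesis using pV by simp
        qed
      qed
    qed
    show "{p\<in>VG. own p = u} \<subseteq> verts (H u)"
    proof
      fix p assume p: "p \<in> {p\<in>VG. own p = u}"
      show "p \<in> verts (H u)"
      proof (cases "\<not> cen (fst p) \<and> snd p = phi (fst p) (eu (fst p))")
        case c: True
        have wB: "fst p \<in> VB" using p by (simp add: VG_mem)
        obtain v where v: "v \<noteq> fst p" "eu (fst p) = {fst p, v}" "oth (fst p) (eu (fst p)) = v"
          using end_edge[OF wB] c by metis
        have "v = u" using p c v(3) by (simp add: own_def)
        have eP: "eu (fst p) \<in> P" using eu_end[OF wB] c by blast
        then have "eu (fst p) \<in> Pat P u" using v \<open>v = u\<close> by (simp add: Pat_memP)
        moreover have "p \<in> al (eu (fst p))" using c v by (simp add: alpha_mem)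
        ultimately show ?thesis using VHe by blast
      next
        case False
        then have "fst p = u" using p own_std[OF False] by simp
        then show ?thesis using VHe p by (cases p) (auto simp: VG_mem)
      qed
    qed
  qed
next
  case False
  have VHe: "verts (H u) = {u} \<times> (verts (A u) - {a u} - {phi u (eu u)})" using H_end[OF False] by simp
  show ?thesis
  proof
    show "verts (H u) \<subseteq> {p\<in>VG. own p = u}"
    proof
      fix p assume "p \<in> verts (H u)"
      then have "p \<in> {u} \<times> (verts (A u) - {a u} - {phi u (eu u)})" using VHe by simp
      then have p: "fst p = u" "snd p \<in> verts (A u)" "snd p \<noteq> a u" "snd p \<noteq> phi u (eu u)"
        by (simp_all add: mem_Times_iff)
      then have "p \<in> VG" using u by (simp add: VG_mem)
      moreover have "own p = fst p" using p by (intro own_std) simp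
      ultimately show "p \<in> {p\<in>VG. own p = u}" using p by simp
    qed
    show "{p\<in>VG. own p = u} \<subseteq> verts (H u)"
    proof
      fix p assume p: "p \<in> {p\<in>VG. own p = u}"
      have "\<not> (\<not> cen (fst p) \<and> snd p = phi (fst p) (eu (fst p)))"
      proof
        assume c: "\<not> cen (fst p) \<and> snd p = phi (fst p) (eu (fst p))"
        have wB: "fst p \<in> VB" using p by (simp add: VG_mem)
        obtain v where v: "oth (fst p) (eu (fst p)) = v" "cen v"
          using end_edge[OF wB] c by metis
        have "v = u" using p c v(1) by (simp add: own_def)
        then show False using v(2) False by simp
      qed
      then have "fst p = u" "snd p \<noteq> phi u (eu u)" using p False by (auto simp: own_def)
      then show "p \<in> verts (H u)" using VHe p by (cases p) (auto simp: VG_mem)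
    qed
  qed
qed

end

context withP begin

lemma lift_mem: "f \<in> lift_edges u E \<longleftrightarrow> (\<exists>e\<in>E. f = Pair u ` e)"
  by (auto simp: lift_edges_def)

lemma sH: assumes u: "u \<in> VB" shows "simple_edges (verts (H u)) (edges (H u))"
  unfolding simple_edges_def
proof
  fix f assume f: "f \<in> edges (H u)"
  show "\<exists>x y. x \<noteq> y \<and> x \<in> verts (H u) \<and> y \<in> verts (H u) \<and> f = {x, y}"
  proof (cases "cen u")
    case True
    have fe: "f \<in> lift_edges u {e\<in>edges (A u). e \<inter> {a u} = {}} \<or> f \<in> al ` Pat P u"
      using f H_cen[OF True] by simp
    then show ?thesis
    proof
      assume "f \<in> lift_edges u {e\<in>edges (A u). e \<inter> {a u} = {}}"
      then obtain e0 where e0: "e0 \<in> edges (A u)" "a u \<notin> e0" "f = Pair u ` e0" by (auto simp: lift_mem)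
      obtain x y where xy: "x \<noteq> y" "x \<in> verts (A u)" "y \<in> verts (A u)" "e0 = {x,y}"
        using simple_edgesD[OF sA[OF u] e0(1)] by blast
      have "(u,x) \<in> verts (H u)" "(u,y) \<in> verts (H u)" using xy e0 H_cen[OF True] by auto
      moreover have "f = {(u,x),(u,y)}" using e0 xy by simp
      ultimately show ?thesis using xy(1) by blast
    next
      assume "f \<in> al ` Pat P u"
      then obtain e where e: "e \<in> Pat P u" "f = al e" by blast
      have eB: "e \<in> EB" using e PE by (auto simp: Pat_memP)
      obtain p q where pq: "p \<noteq> q" "al e = {(p, phi p e), (q, phi q e)}"
        using alpha_edge[OF eB] by blast
      have "al e \<subseteq> verts (H u)" using e H_cen[OF True] by auto
      then show ?thesis using pq e by (intro exI[of _ "(p, phi p e)"] exI[of _ "(q, phi q e)"]) auto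
    qed
  next
    case False
    have "f \<in> lift_edges u {e\<in>edges (A u). e \<inter> {a u} = {} \<and> e \<inter> {phi u (eu u)} = {}}"
      using f H_end[OF False] by simp
    then obtain e0 where e0: "e0 \<in> edges (A u)" "a u \<notin> e0" "phi u (eu u) \<notin> e0" "f = Pair u ` e0"
      by (auto simp: lift_mem)
    obtain x y where xy: "x \<noteq> y" "x \<in> verts (A u)" "y \<in> verts (A u)" "e0 = {x,y}"
      using simple_edgesD[OF sA[OF u] e0(1)] by blast
    have "(u,x) \<in> verts (H u)" "(u,y) \<in> verts (H u)" using xy e0 H_end[OF False] by auto
    moreover have "f = {(u,x),(u,y)}" using e0 xy by simp
    ultimately show ?thesis using xy(1) by blast
  qed
qed

lemma EH_EG: assumes u: "u \<in> VB" shows "edges (H u) \<subseteq> EG"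
proof
  fix f assume f: "f \<in> edges (H u)"
  show "f \<in> EG"
  proof (cases "cen u")
    case True
    have fe: "f \<in> lift_edges u {e\<in>edges (A u). e \<inter> {a u} = {}} \<or> f \<in> al ` Pat P u"
      using f H_cen[OF True] by simp
    then show ?thesis
    proof
      assume "f \<in> lift_edges u {e\<in>edges (A u). e \<inter> {a u} = {}}"
      then obtain e0 where e0: "e0 \<in> edges (A u)" "a u \<notin> e0" "f = Pair u ` e0" by (auto simp: lift_mem)
      then show ?thesis using u EG_mem by blast
    next
      assume "f \<in> al ` Pat P u"
      then obtain e where e: "e \<in> Pat P u" "f = al e" by blast
      have eB: "e \<in> EB" using e PE by (auto simp: Pat_memP)
      then show ?thesis using e EG_mem by blast
    qed
  next
    case False
    have "f \<in> lift_edges u {e\<in>edges (A u). e \<inter> {a u} = {} \<and> e \<inter> {phi u (eu u)} = {}}"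
      using f H_end[OF False] by simp
    then obtain e0 where e0: "e0 \<in> edges (A u)" "a u \<notin> e0" "f = Pair u ` e0"
      by (auto simp: lift_mem)
    then show ?thesis using u EG_mem by blast
  qed
qed

lemma VH_mem: "u \<in> VB \<Longrightarrow> p \<in> verts (H u) \<longleftrightarrow> p \<in> VG \<and> own p = u"
  using VH_own by blast

lemma E2:
  assumes u: "u \<in> VB" and f: "f \<in> EG" and fs: "f \<subseteq> verts (H u)"
  shows "f \<in> edges (H u)"
  using f
proof (cases rule: EG_cases)
  case (l w e0)
  obtain x y where xy: "x \<noteq> y" "x \<in> verts (A w)" "y \<in> verts (A w)" "e0 = {x,y}"
    using simple_edgesD[OF sA[OF l(1)] l(2)] by blast
  have ox: "own (w,x) = u" "own (w,y) = u" using fs l(4) xy(4) VH_mem[OF u] by auto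
  show ?thesis
  proof (cases "w = u")
    case True
    show ?thesis
    proof (cases "cen u")
      case c: True
      have "f \<in> lift_edges u {e\<in>edges (A u). e \<inter> {a u} = {}}"
        using l True by (auto simp: lift_mem)
      then show ?thesis using H_cen[OF c] by simp
    next
      case c: False
      have inH: "(u,x) \<in> verts (H u)" "(u,y) \<in> verts (H u)" using fs l(4) xy(4) True by auto
      then have "x \<noteq> phi u (eu u)" "y \<noteq> phi u (eu u)" using H_end[OF c] by auto
      then have "f \<in> lift_edges u {e\<in>edges (A u). e \<inter> {a u} = {} \<and> e \<inter> {phi u (eu u)} = {}}"
        using l True xy(4) by (auto simp: lift_mem)
      then show ?thesis using H_end[OF c] by simp
    qed
  next
    case False
    have "\<not> cen w \<and> x = phi w (eu w)"
    proof (rule ccontr)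
      assume "\<not> (\<not> cen w \<and> x = phi w (eu w))"
      then have "own (w,x) = w" using own_std[of "(w,x)"] by simp
      then show False using ox False by simp
    qed
    moreover have "\<not> cen w \<and> y = phi w (eu w)"
    proof (rule ccontr)
      assume "\<not> (\<not> cen w \<and> y = phi w (eu w))"
      then have "own (w,y) = w" using own_std[of "(w,y)"] by simp
      then show False using ox False by simp
    qed
    ultimately show ?thesis using xy(1) by simp
  qed
next
  case (al e)
  obtain p q where pq: "p \<noteq> q" "p \<in> VB" "q \<in> VB" "e = {p,q}" using simple_edgesD[OF sB al(1)] by blast
  have aleq: "al e = {(p, phi p e), (q, phi q e)}" using pq(4) alpha_uv[of phi p q] by simp
  have op: "own (p, phi p e) = u" "own (q, phi q e) = u" using fs al(2) aleq VH_mem[OF u] by auto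
  have key: "e \<in> Pat P u \<and> cen u" if t: "t \<in> e" "t \<noteq> u" "own (t, phi t e) = u" for t
  proof -
    have tB: "t \<in> VB" using t EB_VB al(1) by blast
    have sp: "\<not> cen t \<and> phi t e = phi t (eu t)"
    proof (rule ccontr)
      assume "\<not> (\<not> cen t \<and> phi t e = phi t (eu t))"
      then have "own (t, phi t e) = t" using own_std[of "(t, phi t e)"] by simp
      then show False using t by simp
    qed
    obtain v where v: "eu t = {t,v}" "oth t (eu t) = v" "cen v" "v \<in> VB"
      using end_edge[OF tB] sp by metis
    have eut: "eu t \<in> P" "t \<in> eu t" using eu_end[OF tB] sp by auto
    have "e = eu t" using phi_inj[OF al(1) _ t(1) eut(2)] eut PE sp by auto
    moreover have "own (t, phi t e) = v" using own_spec[of "(t, phi t e)"] sp v by simp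
    ultimately show ?thesis using t(3) v eut by (auto simp: Pat_memP)
  qed
  have "e \<in> Pat P u \<and> cen u"
  proof (cases "p = u")
    case True
    then have "q \<noteq> u" using pq by simp
    then show ?thesis using key[of q] pq op by simp
  next
    case False then show ?thesis using key[of p] pq op by simp
  qed
  then show ?thesis using H_cen al(2) by simp
qed

lemma alH: assumes u: "u \<in> VB" and e: "e \<in> EB" and f: "al e \<in> edges (H u)"
  shows "e \<in> Pat P u \<and> cen u"
proof -
  obtain p q where pq: "p \<noteq> q" "e = {p,q}" using simple_edgesD[OF sB e] by blast
  have nl: "al e \<notin> lift_edges u X" for X
  proof
    assume "al e \<in> lift_edges u X"
    then obtain e0 where "al e = Pair u ` e0" by (auto simp: lift_mem)
    then have "fst ` al e \<subseteq> {u}" by auto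
    then have "e \<subseteq> {u}" using fst_alpha by metis
    then show False using pq by auto
  qed
  show ?thesis
  proof (cases "cen u")
    case True
    then have "al e \<in> al ` Pat P u" using f H_cen[OF True] nl by auto
    then obtain e' where "e' \<in> Pat P u" "al e = al e'" by blast
    then show ?thesis using alpha_inj True by blast
  next
    case False
    then show ?thesis using f H_end[OF False] nl by auto
  qed
qed

end

locale withPQ = withP +
  fixes Q
  assumes QP: "Q \<in> GammaGP B A a phi P"

sublocale withPQ \<subseteq> factor B A a phi Q
  using QP by unfold_locales (simp add: GammaGP_def)

context withPQ begin

lemma PQ_P: "PQ = P" using QP by (simp add: GammaGP_def PQ_def)

lemma comp_own: assumes x: "x \<in> VG" and y: "y \<in> cp x" shows "own y = own x"
proof -
  let ?w = "fst x"
  have wB: "?w \<in> VB" using x by (simp add: VG_mem)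
  show ?thesis
  proof (cases "\<exists>e\<in>Pat P ?w. x \<in> cp (?w, phi ?w e)")
    case True
    then obtain e where e: "e \<in> Pat P ?w" "x \<in> cp (?w, phi ?w e)" by blast
    have eP: "e \<in> P" "?w \<in> e" using e by (auto simp: Pat_memP)
    have eB: "e \<in> EB" using eP PE by blast
    have eQ: "e \<in> PQ" using eP PQ_P by simp
    obtain v where v: "v \<noteq> ?w" "e = {?w,v}" using EB_form[OF eB eP(2)] by blast
    have wV: "(?w, phi ?w e) \<in> VG" using phiVG[OF eB eP(2)] .
    have cpx: "cp x = cp (?w, phi ?w e)" using cp_eq[OF wV e(2)] .
    obtain z t where zt: "e = {z,t}" "z \<noteq> t" "cen z" "\<not> cen t" "cp x = cp (z, phi z e)"
    proof (cases "cen ?w")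
      case True
      have "\<not> cen v" using altP[OF eP(1) eP(2), of v] v True by auto
      then show ?thesis using that[of ?w v] v True cpx by auto
    next
      case False
      have "cen v" using altP[OF eP(1) eP(2), of v] v False by auto
      moreover have "cp (v, phi v e) = cp (?w, phi ?w e)" using cp_other[OF eQ v(2)] .
      ultimately show ?thesis using that[of v ?w] v False cpx by (auto simp: insert_commute)
    qed
    have zB: "z \<in> VB" "t \<in> VB" using zt(1) eB EB_VB by auto
    have ePz: "e \<in> Pat PQ z" using eP zt(1) PQ_P by (auto simp: Pat_mem)
    have cz: "c z e = 2"
    proof -
      have "card (Pat PQ z) = 2" using zt(3) PQ_P by (simp add: cen_def)
      then show ?thesis using classify[OF zB(1)] ePz by auto
    qed
    obtain y0 where D: "cp (z, phi z e) = {(z, phi z e), (t, phi t e), (z, y0)}"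
      using SL3[OF eQ zt(1) zt(2)] cz by auto
    have o1: "own (z, phi z e) = z" "own (z, y0) = z" using zt(3) own_std by auto
    have "e \<in> Pat P t" using eP(1) zt(1) by (simp add: Pat_memP)
    then have ete: "eu t = e" using eu_end(1)[OF zB(2) zt(4)] by simp
    have o2: "own (t, phi t e) = z"
    proof -
      have "own (t, phi t e) = oth t e" using own_spec[of "(t, phi t e)"] zt(4) ete by simp
      also have "\<dots> = z" using oth_eq[OF eB, of t z] zt by (simp add: insert_commute)
      finally show ?thesis .
    qed
    have all: "\<And>q. q \<in> cp x \<Longrightarrow> own q = z" using zt(5) D o1 o2 by auto
    show ?thesis using all[OF y] all[OF conjunct1[OF cp_self[OF x]]] by simp
  next
    case False
    have xS: "x \<in> S ?w" using x by (simp add: S_mem)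
    have xR: "x \<in> R ?w" using xS False PQ_P by (auto simp: R_def)
    have ownR: "own q = ?w" if q: "q \<in> R ?w" for q
    proof -
      have qS: "fst q = ?w" "q \<in> VG" using q by (auto simp: R_def S_mem)
      have "\<not> (\<not> cen ?w \<and> snd q = phi ?w (eu ?w))"
      proof
        assume h: "\<not> cen ?w \<and> snd q = phi ?w (eu ?w)"
        then have ee: "eu ?w \<in> Pat PQ ?w" using eu_end[OF wB] PQ_P by auto
        have qq: "q = (?w, phi ?w (eu ?w))" using h qS by (metis prod.collapse)
        have "eu ?w \<in> EB" "?w \<in> eu ?w" using ee PQ_EB by (auto simp: Pat_mem)
        then have "q \<in> cp (?w, phi ?w (eu ?w))" using qq cp_self phiVG by metis
        then show False using q ee by (auto simp: R_def)
      qed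
      then show ?thesis using own_std[of q] qS by simp
    qed
    have yR: "y \<in> R ?w" using R1[OF wB xR] y by (rule subsetD)
    show ?thesis using ownR[OF xR] ownR[OF yR] by simp
  qed
qed

lemma cp_VH: assumes x: "x \<in> VG" shows "cp x \<subseteq> verts (H (own x))"
proof
  fix y assume y: "y \<in> cp x"
  have "y \<in> VG" using y closedP3_D(1) cp_self[OF x] by blast
  then show "y \<in> verts (H (own x))" using VH_mem[OF own_VB[OF x]] comp_own[OF x y] by simp
qed

lemma RF: assumes u: "u \<in> VB" shows "restrict_factor G Q (H u) = {f\<in>Q. f \<subseteq> verts (H u)}"
proof
  show "restrict_factor G Q (H u) \<subseteq> {f\<in>Q. f \<subseteq> verts (H u)}"
    unfolding restrict_factor_def by blast
  show "{f\<in>Q. f \<subseteq> verts (H u)} \<subseteq> restrict_factor G Q (H u)"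
  proof
    fix f assume f: "f \<in> {f\<in>Q. f \<subseteq> verts (H u)}"
    have fE: "f \<in> EG" using f QE by blast
    obtain x y where xy: "x \<noteq> y" "x \<in> VG" "f = {x,y}" using simple_edgesD[OF sG fE] by blast
    have xf: "x \<in> f" using xy by simp
    have ox: "own x = u" using f xf VH_mem[OF u] by blast
    have C: "cp x \<in> components (VG, Q)" using xy(2) by (simp add: components_def)
    have fC: "f \<subseteq> cp x" using cp_edge f xf by blast
    have CV: "cp x \<subseteq> verts (H u)" using cp_VH[OF xy(2)] ox by simp
    have CE: "{e\<in>Q. e \<subseteq> cp x} \<subseteq> edges (H u)"
      using E2[OF u] QE CV by blast
    show "f \<in> restrict_factor G Q (H u)"
      unfolding restrict_factor_def using f C fC CV CE by (simp add: verts_def[of G, symmetric]) blast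
  qed
qed

lemma restr_lf: assumes u: "u \<in> VB" shows "lambda_factor (H u) {f\<in>Q. f \<subseteq> verts (H u)}"
proof -
  have sub: "{f\<in>Q. f \<subseteq> verts (H u)} \<subseteq> edges (H u)" using E2[OF u] QE by blast
  have g: "good (verts (H u)) {f\<in>Q. f \<subseteq> verts (H u)}"
  proof (rule good_restrict)
    fix x assume x: "x \<in> verts (H u)"
    then have xV: "x \<in> VG" "own x = u" using VH_mem[OF u] by auto
    show "\<exists>C. x \<in> C \<and> C \<subseteq> verts (H u) \<and> closedP3 VG Q C"
      using cp_self[OF xV(1)] cp_VH[OF xV(1)] xV(2) by auto
  qed
  show ?thesis using lf_iff[OF sH[OF u]] sub g by simp
qed

lemma Q_union: "Q = (\<Union>u\<in>VB. {f\<in>Q. f \<subseteq> verts (H u)})"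
proof
  show "Q \<subseteq> (\<Union>u\<in>VB. {f\<in>Q. f \<subseteq> verts (H u)})"
  proof
    fix f assume f: "f \<in> Q"
    have fE: "f \<in> EG" using f QE by blast
    obtain x y where xy: "x \<noteq> y" "x \<in> VG" "f = {x,y}" using simple_edgesD[OF sG fE] by blast
    have "f \<subseteq> cp x" using cp_edge f xy by blast
    then have "f \<subseteq> verts (H (own x))" using cp_VH[OF xy(2)] by blast
    then show "f \<in> (\<Union>u\<in>VB. {f\<in>Q. f \<subseteq> verts (H u)})" using own_VB[OF xy(2)] f by blast
  qed
qed blast

end

context withP begin

lemma wPQ: "Q \<in> GammaGP B A a phi P \<Longrightarrow> withPQ B A a phi P Q"
  by (intro withPQ.intro withP_axioms) (simp add: withPQ_axioms_def)

lemma VH_disj: "u \<in> VB \<Longrightarrow> w \<in> VB \<Longrightarrow> u \<noteq> w \<Longrightarrow> verts (H u) \<inter> verts (H w) = {}"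
  using VH_own by auto

lemma VH_union: "(\<Union>u\<in>VB. verts (H u)) = VG"
proof
  show "(\<Union>u\<in>VB. verts (H u)) \<subseteq> VG" using VH_mem by blast
  show "VG \<subseteq> (\<Union>u\<in>VB. verts (H u))"
  proof
    fix p assume p: "p \<in> VG"
    then have "p \<in> verts (H (own p))" using VH_mem[OF own_VB[OF p]] by simp
    then show "p \<in> (\<Union>u\<in>VB. verts (H u))" using own_VB[OF p] by blast
  qed
qed

lemma EH_sub: "u \<in> VB \<Longrightarrow> f \<in> edges (H u) \<Longrightarrow> f \<subseteq> verts (H u) \<and> f \<noteq> {}"
  using simple_edgesD[OF sH] by blast

lemma surj_part:
  assumes F: "F \<in> (\<Pi>\<^sub>E u\<in>VB. Gamma (H u))"
  defines "Q \<equiv> \<Union>u\<in>VB. F u"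
  shows "Q \<in> GammaGP B A a phi P" "\<And>u. u \<in> VB \<Longrightarrow> {f\<in>Q. f \<subseteq> verts (H u)} = F u"
proof -
  have Fu: "F u \<subseteq> edges (H u) \<and> good (verts (H u)) (F u)" if u: "u \<in> VB" for u
  proof -
    have "lambda_factor (H u) (F u)" using F u by (auto simp: Gamma_def)
    then show ?thesis using lf_iff[OF sH[OF u]] by blast
  qed
  have sub: "\<And>u f. u \<in> VB \<Longrightarrow> f \<in> F u \<Longrightarrow> f \<subseteq> verts (H u) \<and> f \<noteq> {}"
    using Fu EH_sub by blast
  have gQ: "good VG Q"
    using good_glue[of VB "\<lambda>u. verts (H u)" F] VH_disj sub Fu VH_union unfolding Q_def by metis
  have QE: "Q \<subseteq> EG" using Fu EH_EG unfolding Q_def by blast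
  have lf: "lambda_factor G Q" using lf_iff[OF sG] gQ QE by simp
  have al: "{e\<in>EB. al e \<in> Q} = P"
  proof
    show "{e\<in>EB. al e \<in> Q} \<subseteq> P"
    proof
      fix e assume e: "e \<in> {e\<in>EB. al e \<in> Q}"
      then obtain u where u: "u \<in> VB" "al e \<in> F u" unfolding Q_def by blast
      then have "al e \<in> edges (H u)" using Fu by blast
      then show "e \<in> P" using alH[OF u(1)] e by (auto simp: Pat_memP)
    qed
    show "P \<subseteq> {e\<in>EB. al e \<in> Q}"
    proof
      fix e assume eP: "e \<in> P"
      have eB: "e \<in> EB" using eP PE by blast
      obtain p q where pq: "p \<noteq> q" "e = {p,q}" using simple_edgesD[OF sB eB] by blast
      obtain z t where zt: "e = {z,t}" "z \<noteq> t" "cen z" "\<not> cen t"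
      proof (cases "cen p")
        case True
        have "\<not> cen q" using altP[OF eP, of p q] pq True by auto
        then show ?thesis using that[of p q] pq True by auto
      next
        case False
        have "cen q" using altP[OF eP, of p q] pq False by auto
        then show ?thesis using that[of q p] pq False by (auto simp: insert_commute)
      qed
      have zB: "z \<in> VB" "t \<in> VB" using zt(1) eB EB_VB by auto
      have "e \<in> Pat P t" using eP zt(1) by (simp add: Pat_memP)
      then have ete: "eu t = e" using eu_end(1)[OF zB(2) zt(4)] by simp
      have tV: "(t, phi t e) \<in> VG" using phiVG[OF eB] zt(1) by simp
      have ot: "own (t, phi t e) = z"
      proof -
        have "own (t, phi t e) = oth t e" using own_spec[of "(t, phi t e)"] zt(4) ete by simp
        also have "\<dots> = z" using oth_eq[OF eB, of t z] zt by (simp add: insert_commute)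
        finally show ?thesis .
      qed
      have tH: "(t, phi t e) \<in> verts (H z)" using VH_mem[OF zB(1)] tV ot by simp
      obtain C where C: "(t, phi t e) \<in> C" "closedP3 (verts (H z)) (F z) C"
        using Fu[OF zB(1)] tH unfolding good_def by blast
      obtain g where g: "g \<in> {g\<in>F z. g \<subseteq> C}" "(t, phi t e) \<in> g"
        using P3_cover[OF closedP3_D(2)[OF C(2)] C(1)] by blast
      have gH: "g \<in> edges (H z)" using g Fu[OF zB(1)] by blast
      have "g \<in> lift_edges z {e\<in>edges (A z). e \<inter> {a z} = {}} \<or> g \<in> al ` Pat P z"
        using gH H_cen[OF zt(3)] by simp
      moreover have "g \<notin> lift_edges z X" for X
      proof
        assume "g \<in> lift_edges z X"
        then obtain e0 where "g = Pair z ` e0" by (auto simp: lift_mem)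
        then show False using g(2) zt(2) by auto
      qed
      ultimately obtain e' where e': "e' \<in> Pat P z" "g = al e'" by blast
      have e'P: "e' \<in> P" "z \<in> e'" using e'(1) by (auto simp: Pat_memP)
      have "t \<in> e'" "phi t e = phi t e'" using g(2) e'(2) by (auto simp: alpha_mem)
      then have "e' = e" using phi_inj[of e' e t] e'P PE eB zt(1) by auto
      then have "al e \<in> F z" using g e' by simp
      then show "e \<in> {e\<in>EB. al e \<in> Q}" using eB zB unfolding Q_def by blast
    qed
  qed
  show "Q \<in> GammaGP B A a phi P" using lf al by (simp add: GammaGP_def)
  fix u assume u: "u \<in> VB"
  show "{f\<in>Q. f \<subseteq> verts (H u)} = F u"
  proof
    show "F u \<subseteq> {f\<in>Q. f \<subseteq> verts (H u)}" using sub[OF u] u unfolding Q_def by blast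
    show "{f\<in>Q. f \<subseteq> verts (H u)} \<subseteq> F u"
    proof
      fix f assume f: "f \<in> {f\<in>Q. f \<subseteq> verts (H u)}"
      then obtain w where w: "w \<in> VB" "f \<in> F w" unfolding Q_def by blast
      have "f \<subseteq> verts (H w)" "f \<noteq> {}" using sub[OF w] by auto
      then have "w = u" using VH_disj[OF u w(1)] f by blast
      then show "f \<in> F u" using w by simp
    qed
  qed
qed

lemma bijP: "bij_betw (\<lambda>Q. \<lambda>u\<in>VB. restrict_factor G Q (H u))
                  (GammaGP B A a phi P) (\<Pi>\<^sub>E u\<in>VB. Gamma (H u))"
  unfolding bij_betw_def
proof (intro conjI)
  have RFe: "\<And>Q u. Q \<in> GammaGP B A a phi P \<Longrightarrow> u \<in> VB \<Longrightarrow> restrict_factor G Q (H u) = {f\<in>Q. f \<subseteq> verts (H u)}"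
    by (rule withPQ.RF[OF wPQ])
  show "inj_on (\<lambda>Q. \<lambda>u\<in>VB. restrict_factor G Q (H u)) (GammaGP B A a phi P)"
  proof (rule inj_onI)
    fix Q1 Q2 assume Q1: "Q1 \<in> GammaGP B A a phi P" and Q2: "Q2 \<in> GammaGP B A a phi P"
      and eq: "(\<lambda>u\<in>VB. restrict_factor G Q1 (H u)) = (\<lambda>u\<in>VB. restrict_factor G Q2 (H u))"
    have "\<And>u. u \<in> VB \<Longrightarrow> {f\<in>Q1. f \<subseteq> verts (H u)} = {f\<in>Q2. f \<subseteq> verts (H u)}"
    proof -
      fix u assume u: "u \<in> VB"
      have "restrict_factor G Q1 (H u) = restrict_factor G Q2 (H u)"
        using fun_cong[OF eq, of u] u by simp
      then show "{f\<in>Q1. f \<subseteq> verts (H u)} = {f\<in>Q2. f \<subseteq> verts (H u)}" using RFe Q1 Q2 u by simp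
    qed
    then have "(\<Union>u\<in>VB. {f\<in>Q1. f \<subseteq> verts (H u)}) = (\<Union>u\<in>VB. {f\<in>Q2. f \<subseteq> verts (H u)})" by simp
    then show "Q1 = Q2" using withPQ.Q_union[OF wPQ[OF Q1]] withPQ.Q_union[OF wPQ[OF Q2]] by simp
  qed
  show "(\<lambda>Q. \<lambda>u\<in>VB. restrict_factor G Q (H u)) ` GammaGP B A a phi P = (\<Pi>\<^sub>E u\<in>VB. Gamma (H u))"
  proof
    show "(\<lambda>Q. \<lambda>u\<in>VB. restrict_factor G Q (H u)) ` GammaGP B A a phi P \<subseteq> (\<Pi>\<^sub>E u\<in>VB. Gamma (H u))"
    proof
      fix X assume "X \<in> (\<lambda>Q. \<lambda>u\<in>VB. restrict_factor G Q (H u)) ` GammaGP B A a phi P"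
      then obtain Q where Q: "Q \<in> GammaGP B A a phi P" "X = (\<lambda>u\<in>VB. restrict_factor G Q (H u))" by blast
      have "\<And>u. u \<in> VB \<Longrightarrow> restrict_factor G Q (H u) \<in> Gamma (H u)"
        using RFe[OF Q(1)] withPQ.restr_lf[OF wPQ[OF Q(1)]] by (simp add: Gamma_def)
      then show "X \<in> (\<Pi>\<^sub>E u\<in>VB. Gamma (H u))" using Q(2) by simp
    qed
    show "(\<Pi>\<^sub>E u\<in>VB. Gamma (H u)) \<subseteq> (\<lambda>Q. \<lambda>u\<in>VB. restrict_factor G Q (H u)) ` GammaGP B A a phi P"
    proof
      fix F assume F: "F \<in> (\<Pi>\<^sub>E u\<in>VB. Gamma (H u))"
      let ?Q = "\<Union>u\<in>VB. F u"
      have QG: "?Q \<in> GammaGP B A a phi P" using surj_part(1)[OF F] .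
      have eqF: "(\<lambda>u\<in>VB. restrict_factor G ?Q (H u)) = F"
      proof
        fix u show "(\<lambda>u\<in>VB. restrict_factor G ?Q (H u)) u = F u"
        proof (cases "u \<in> VB")
          case True
          then show ?thesis using RFe[OF QG True] surj_part(2)[OF F True] by simp
        next
          case False
          then show ?thesis using F by (simp add: PiE_def extensional_def)
        qed
      qed
      show "F \<in> (\<lambda>Q. \<lambda>u\<in>VB. restrict_factor G Q (H u)) ` GammaGP B A a phi P"
        by (rule image_eqI[where x="?Q"]) (use eqF QG in simp_all)
    qed
  qed
qed

end

lemma good_union:
  assumes g1: "good V1 F1" and g2: "good V2 F2" and d: "V1 \<inter> V2 = {}"
    and s1: "\<And>f. f \<in> F1 \<Longrightarrow> f \<subseteq> V1 \<and> f \<noteq> {}" and s2: "\<And>f. f \<in> F2 \<Longrightarrow> f \<subseteq> V2 \<and> f \<noteq> {}"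
  shows "good (V1 \<union> V2) (F1 \<union> F2)"
proof -
  let ?V = "\<lambda>b. if b then V1 else V2" and ?F = "\<lambda>b. if b then F1 else F2"
  have "good (\<Union>b\<in>UNIV. ?V b) (\<Union>b\<in>UNIV. ?F b)"
  proof (rule good_glue)
    show "\<And>i j. i \<in> UNIV \<Longrightarrow> j \<in> UNIV \<Longrightarrow> i \<noteq> j \<Longrightarrow> ?V i \<inter> ?V j = {}" using d by auto
    show "\<And>i f. i \<in> UNIV \<Longrightarrow> f \<in> ?F i \<Longrightarrow> f \<subseteq> ?V i \<and> f \<noteq> {}" using s1 s2 by (auto split: if_splits)
    show "\<And>i. i \<in> UNIV \<Longrightarrow> good (?V i) (?F i)" using g1 g2 by auto
  qed
  moreover have "(\<Union>b\<in>UNIV. ?V b) = V1 \<union> V2" "(\<Union>b\<in>UNIV. ?F b) = F1 \<union> F2" by (auto simp: UNIV_bool)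
  ultimately show ?thesis by simp
qed

lemma good_path:
  assumes d: "distinct [p,q,r]"
  shows "good {p,q,r} {{p,q},{q,r}}"
proof -
  have eq: "{e \<in> {{p,q},{q,r}}. e \<subseteq> {p,q,r}} = {{p,q},{q,r}}" by auto
  have p3: "is_P3 {p,q,r} {e \<in> {{p,q},{q,r}}. e \<subseteq> {p,q,r}}"
    unfolding eq is_P3_def using d by blast
  have cl: "closedP3 {p,q,r} {{p,q},{q,r}} {p,q,r}"
    unfolding closedP3_def using p3 by auto
  show ?thesis unfolding good_def
  proof
    fix x assume x: "x \<in> {p,q,r}"
    show "\<exists>C. x \<in> C \<and> closedP3 {p,q,r} {{p,q},{q,r}} C"
      by (rule exI[of _ "{p,q,r}"]) (use x cl in simp)
  qed
qed

context setting begin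

lemma adj_sym: "adj H x y = adj H y x" by (simp add: adj_def insert_commute)

lemma nbrs3: "u \<in> VB \<Longrightarrow> x \<in> verts (A u) \<Longrightarrow> card (nbrs (A u) x) = 3"
  using A3 by (auto simp: cubic_def degree_def)

lemma nb_sym: "y \<in> nbrs H x \<longleftrightarrow> x \<in> nbrs H y" by (simp add: nbrs_def adj_sym)

lemma find_z:
  assumes u: "u \<in> VB" and y: "y1 \<in> N u" "y2 \<in> N u" "y1 \<noteq> y2"
  shows "\<exists>z1 z2. distinct [z1, y1, a u, y2, z2] \<and> {z1, y1} \<in> edges (A u) \<and> {y2, z2} \<in> edges (A u)"
proof -
  let ?A = "A u" and ?a = "a u"
  have sA': "simple_graph ?A" using simpleA[OF u] .
  have aV: "?a \<in> verts ?A" using compu[OF u] by blast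
  have y1p: "y1 \<in> verts ?A" "y1 \<noteq> ?a" using N_sub[OF u y(1)] by auto
  have y2p: "y2 \<in> verts ?A" "y2 \<noteq> ?a" using N_sub[OF u y(2)] by auto
  have ay1: "?a \<in> nbrs ?A y1" "?a \<in> nbrs ?A y2" using y nb_sym by metis+
  have irr: "\<And>x z. z \<in> nbrs ?A x \<Longrightarrow> z \<noteq> x \<and> z \<in> verts ?A" using nbrs_in[OF sA'] by blast
  have edge: "\<And>x z. z \<in> nbrs ?A x \<Longrightarrow> {z, x} \<in> edges ?A" by (simp add: nbrs_def adj_def insert_commute)
  have c1: "card (nbrs ?A y1) = 3" "card (nbrs ?A y2) = 3" using nbrs3[OF u] y1p y2p by auto
  show ?thesis
  proof (cases "y2 \<in> nbrs ?A y1")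
    case False
    then have y12: "y1 \<notin> nbrs ?A y2" using nb_sym by metis
    have "card (nbrs ?A y2 - {?a}) = 2" using c1 ay1 by (simp add: card_Diff_singleton_if)
    then obtain z2 where z2: "z2 \<in> nbrs ?A y2" "z2 \<noteq> ?a"
      by (metis Diff_iff card_2_iff insertI1 singletonD)
    have c2: "card (nbrs ?A y1 - {?a}) = 2" using c1 ay1 by (simp add: card_Diff_singleton_if)
    then have fin2: "finite (nbrs ?A y1 - {?a})" by (intro card_ge_0_finite) simp
    have "card (nbrs ?A y1 - {?a} - {z2}) \<ge> 1"
      using c2 fin2 by (simp add: card_Diff_singleton_if)
    then have "nbrs ?A y1 - {?a} - {z2} \<noteq> {}" by (metis card.empty not_one_le_zero)
    then obtain z1 where z1: "z1 \<in> nbrs ?A y1" "z1 \<noteq> ?a" "z1 \<noteq> z2" by blast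
    have "distinct [z1, y1, ?a, y2, z2]"
      using z1 z2 irr[OF z1(1)] irr[OF z2(1)] y y1p y2p False y12 by auto
    moreover have "{y2, z2} \<in> edges ?A" using edge[OF z2(1)] by (simp add: insert_commute)
    ultimately show ?thesis using edge[OF z1(1)] by blast
  next
    case True
    then have y21: "y1 \<in> nbrs ?A y2" using nb_sym by metis
    obtain p where p: "nbrs ?A y1 = {?a, y2, p}" "p \<noteq> ?a" "p \<noteq> y2"
      using card3_ex[OF c1(1) ay1(1) True] y2p by metis
    obtain q where q: "nbrs ?A y2 = {?a, y1, q}" "q \<noteq> ?a" "q \<noteq> y1"
      using card3_ex[OF c1(2) ay1(2) y21] y1p by metis
    have pn: "p \<in> nbrs ?A y1" "q \<in> nbrs ?A y2" using p q by auto
    show ?thesis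
    proof (cases "p = q")
      case False
      have "distinct [p, y1, ?a, y2, q]"
        using False p q irr[OF pn(1)] irr[OF pn(2)] y y1p y2p by auto
      moreover have "{y2, q} \<in> edges ?A" using edge[OF pn(2)] by (simp add: insert_commute)
      ultimately show ?thesis using edge[OF pn(1)] by blast
    next
      case pq: True
      \<comment> \<open>contradiction with 3-connectivity\<close>
      have finV: "finite (verts ?A)" using sA' by (simp add: simple_graph_def)
      have ca: "card (nbrs ?A ?a) = 3" using nbrs3[OF u aV] .
      have y1a: "y1 \<in> nbrs ?A ?a" "y2 \<in> nbrs ?A ?a" using y by auto
      obtain y3 where y3: "nbrs ?A ?a = {y1, y2, y3}" using card3_ex[OF ca y1a y(3)] by metis
      have pV: "p \<in> verts ?A" using irr[OF pn(1)] by blast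
      have py: "y1 \<in> nbrs ?A p" "y2 \<in> nbrs ?A p" using pn pq nb_sym by metis+
      have y1p': "y1 \<noteq> y2" using y(3) .
      obtain r where r: "nbrs ?A p = {y1, y2, r}" using card3_ex[OF nbrs3[OF u pV] py y1p'] by metis
      let ?T = "{?a, y1, y2, p}"
      let ?S = "{y3, r} - ?T"
      have cS: "card ?S < 3"
      proof -
        have "card ?S \<le> card {y3, r}" by (rule card_mono) auto
        also have "\<dots> \<le> 2" by (simp add: card_insert_le_m1)
        finally show ?thesis by simp
      qed
      have kc: "k_connected 3 ?A" using A3[OF u] by blast
      have SV: "?S \<subseteq> verts ?A"
        using y3 r irr[of y3 ?a] irr[of r p] by auto
      have conn: "connected (del_verts ?A ?S)" using kc SV cS unfolding k_connected_def by blast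
      have c8: "card (verts ?A) \<ge> 8"
      proof -
        have "card (verts ?A) > 3" using kc by (simp add: k_connected_def)
        moreover have "card (verts ?A) mod 6 = 2" using mod6 u .
        ultimately show ?thesis by presburger
      qed
      have "card (?T \<union> ?S) \<le> 6"
      proof -
        have "?T \<union> ?S \<subseteq> {?a, y1, y2, p, y3, r}" by auto
        then have "card (?T \<union> ?S) \<le> card {?a, y1, y2, p, y3, r}" by (rule card_mono[rotated]) simp
        also have "\<dots> \<le> 6" using card_length[of "[?a, y1, y2, p, y3, r]"] by simp
        finally show ?thesis .
      qed
      then have "\<not> verts ?A \<subseteq> ?T \<union> ?S" using c8 card_mono[of "?T \<union> ?S" "verts ?A"] by auto
      then obtain w where w: "w \<in> verts ?A" "w \<notin> ?T" "w \<notin> ?S" by blast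
      have aD: "?a \<in> verts (del_verts ?A ?S)" using aV by simp
      have wD: "w \<in> verts (del_verts ?A ?S)" using w by simp
      have re: "reach (del_verts ?A ?S) ?a w" using conn aD wD unfolding connected_def by blast
      have nT: "\<And>x. x \<in> ?T \<Longrightarrow> nbrs ?A x \<subseteq> ?T \<union> {y3, r}"
        using y3 p q pq r by auto
      have "w \<in> ?T"
      proof (rule reach_closed[OF re])
        show "?a \<in> ?T" by simp
        fix x v assume x: "x \<in> ?T" and v: "v \<in> verts (del_verts ?A ?S)" and ad: "adj (del_verts ?A ?S) x v"
        have "adj ?A x v" using ad by (simp add: adj_def)
        then have "v \<in> nbrs ?A x" by (simp add: nbrs_def)
        then have "v \<in> ?T \<union> {y3, r}" using nT[OF x] by blast
        then show "v \<in> ?T" using v by auto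
      qed
      then show ?thesis using w by blast
    qed
  qed
qed

end

context withP begin

lemma H_nonempty: assumes u: "u \<in> VB" shows "Gamma (H u) \<noteq> {}"
proof (cases "cen u")
  case False
  let ?x = "phi u (eu u)"
  have e: "eu u \<in> P" "u \<in> eu u" using eu_end[OF u False] by auto
  have xN: "?x \<in> N u" using phi_N e PE by blast
  have ax: "{a u, ?x} \<in> edges (A u)" using N_sub[OF u xN] by blast
  obtain F0 where F0: "lambda_factor (del_verts (A u) {a u, ?x}) F0"
    using h2[OF u ax] by (auto simp: Gamma_def)
  have F0g: "F0 \<subseteq> {e\<in>edges (A u). e \<inter> {a u, ?x} = {}}" "good (verts (A u) - {a u, ?x}) F0"
    using F0 lf_iff[OF simple_del[OF simpleA[OF u]]] by auto
  have gm: "good (Pair u ` (verts (A u) - {a u, ?x})) ((`) (Pair u) ` F0)"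
    by (rule good_map[OF _ subset_UNIV _ F0g(2)]) (auto simp: inj_on_def)
  have VH: "verts (H u) = Pair u ` (verts (A u) - {a u, ?x})" using H_end[OF False] by auto
  have EH: "(`) (Pair u) ` F0 \<subseteq> edges (H u)"
    using H_end[OF False] F0g(1) by (auto simp: lift_edges_def)
  have "lambda_factor (H u) ((`) (Pair u) ` F0)" using lf_iff[OF sH[OF u]] VH EH gm by simp
  then show ?thesis by (auto simp: Gamma_def)
next
  case True
  obtain e1 e2 where e12: "e1 \<noteq> e2" "Pat P u = {e1,e2}" using True unfolding cen_def by (meson card_2_iff)
  have "e1 \<in> Pat P u" "e2 \<in> Pat P u" using e12(2) by simp_all
  then have ein: "e1 \<in> P" "u \<in> e1" "e2 \<in> P" "u \<in> e2" unfolding Pat_memP by simp_all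
  have eB: "e1 \<in> EB" "e2 \<in> EB" using ein PE by auto
  obtain v1 where v1: "v1 \<noteq> u" "e1 = {u,v1}" using EB_form[OF eB(1) ein(2)] by blast
  obtain v2 where v2: "v2 \<noteq> u" "e2 = {u,v2}" using EB_form[OF eB(2) ein(4)] by blast
  have v12: "v1 \<noteq> v2" using v1 v2 e12 by auto
  let ?y1 = "phi u e1" and ?y2 = "phi u e2"
  have yN: "?y1 \<in> N u" "?y2 \<in> N u" using phi_N eB ein by auto
  have yne: "?y1 \<noteq> ?y2" using phi_inj[OF eB ein(2) ein(4)] e12(1) by blast
  obtain z1 z2 where z: "distinct [z1, ?y1, a u, ?y2, z2]" "{z1, ?y1} \<in> edges (A u)" "{?y2, z2} \<in> edges (A u)"
    using find_z[OF u yN yne] by blast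
  have ay: "{?y1, a u} \<in> edges (A u)" "{a u, ?y2} \<in> edges (A u)"
    using N_sub[OF u yN(1)] N_sub[OF u yN(2)] by (auto simp: insert_commute)
  obtain F0 where F0: "lambda_factor (del_verts (A u) {z1, ?y1, a u, ?y2, z2}) F0"
    using h3[OF u z(1) z(2) ay(1) ay(2) z(3)] by (auto simp: Gamma_def)
  let ?X = "{z1, ?y1, a u, ?y2, z2}"
  have F0g: "F0 \<subseteq> {e\<in>edges (A u). e \<inter> ?X = {}}" "good (verts (A u) - ?X) F0"
    using F0 lf_iff[OF simple_del[OF simpleA[OF u]]] by auto
  let ?V0 = "Pair u ` (verts (A u) - ?X)" and ?F0 = "(`) (Pair u) ` F0"
  have g0: "good ?V0 ?F0"
    by (rule good_map[OF _ subset_UNIV _ F0g(2)]) (auto simp: inj_on_def)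
  let ?p1 = "(v1, phi v1 e1)" and ?p2 = "(v2, phi v2 e2)"
  have al1: "al e1 = {?p1, (u, ?y1)}" using v1 alpha_uv[of phi u v1] by (simp add: insert_commute)
  have al2: "al e2 = {?p2, (u, ?y2)}" using v2 alpha_uv[of phi u v2] by (simp add: insert_commute)
  let ?V1 = "{?p1, (u, ?y1), (u, z1)}" and ?F1 = "{{?p1, (u, ?y1)}, {(u, ?y1), (u, z1)}}"
  let ?V2 = "{?p2, (u, ?y2), (u, z2)}" and ?F2 = "{{?p2, (u, ?y2)}, {(u, ?y2), (u, z2)}}"
  have g1: "good ?V1 ?F1" by (rule good_path) (use z(1) v1(1) in auto)
  have g2: "good ?V2 ?F2" by (rule good_path) (use z(1) v2(1) in auto)
  have zV: "z1 \<in> verts (A u)" "z2 \<in> verts (A u)" "?y1 \<in> verts (A u)" "?y2 \<in> verts (A u)"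
    using simple_edgesD[OF sA[OF u] z(2)] simple_edgesD[OF sA[OF u] z(3)] N_sub[OF u] yN
    by (auto simp: doubleton_eq_iff)
  have s0: "\<And>f. f \<in> ?F0 \<Longrightarrow> f \<subseteq> ?V0 \<and> f \<noteq> {}"
  proof -
    fix f assume "f \<in> ?F0"
    then obtain e0 where e0: "e0 \<in> F0" "f = Pair u ` e0" by blast
    have "e0 \<in> edges (del_verts (A u) ?X)" using F0 e0(1) by (simp add: lambda_factor_def subset_iff)
    then obtain x y where "x \<noteq> y" "x \<in> verts (A u) - ?X" "y \<in> verts (A u) - ?X" "e0 = {x,y}"
      using simple_edgesD[OF simple_del[OF simpleA[OF u]]] by (metis verts_del)
    then show "f \<subseteq> ?V0 \<and> f \<noteq> {}" using e0 by auto
  qed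
  have g01: "good (?V0 \<union> ?V1) (?F0 \<union> ?F1)"
    by (rule good_union[OF g0 g1]) (use s0 z(1) v1(1) in auto)
  have g012: "good ((?V0 \<union> ?V1) \<union> ?V2) ((?F0 \<union> ?F1) \<union> ?F2)"
  proof (rule good_union[OF g01 g2])
    show "(?V0 \<union> ?V1) \<inter> ?V2 = {}" using z(1) v1(1) v2(1) v12 by auto
    show "\<And>f. f \<in> ?F0 \<union> ?F1 \<Longrightarrow> f \<subseteq> ?V0 \<union> ?V1 \<and> f \<noteq> {}" using s0 by blast
    show "\<And>f. f \<in> ?F2 \<Longrightarrow> f \<subseteq> ?V2 \<and> f \<noteq> {}" by auto
  qed
  have VH: "verts (H u) = (?V0 \<union> ?V1) \<union> ?V2"
  proof -
    have h0: "verts (H u) = {u} \<times> (verts (A u) - {a u}) \<union> (al e1 \<union> al e2)" using H_cen[OF True] e12 by simp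
    have T: "{u} \<times> (verts (A u) - {a u}) = ?V0 \<union> {(u,?y1),(u,z1),(u,?y2),(u,z2)}"
    proof (rule set_eqI)
      fix pp
      show "pp \<in> {u} \<times> (verts (A u) - {a u}) \<longleftrightarrow> pp \<in> ?V0 \<union> {(u,?y1),(u,z1),(u,?y2),(u,z2)}"
        by (cases pp) (use zV z(1) in auto)
    qed
    have T2: "?V0 \<union> {(u,?y1),(u,z1),(u,?y2),(u,z2)} \<union> (al e1 \<union> al e2) = (?V0 \<union> ?V1) \<union> ?V2"
      unfolding al1 al2 by blast
    show ?thesis by (simp only: h0 T T2)
  qed
  have EH: "(?F0 \<union> ?F1) \<union> ?F2 \<subseteq> edges (H u)"
  proof -
    have "edges (H u) = lift_edges u {e\<in>edges (A u). e \<inter> {a u} = {}} \<union> al ` {e1,e2}"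
      using H_cen[OF True] e12 by simp
    moreover have "?F0 \<subseteq> lift_edges u {e\<in>edges (A u). e \<inter> {a u} = {}}"
      using F0g(1) by (auto simp: lift_edges_def)
    moreover have "{(u, ?y1), (u, z1)} \<in> lift_edges u {e\<in>edges (A u). e \<inter> {a u} = {}}"
      using z(1,2) by (auto simp: lift_edges_def insert_commute intro!: image_eqI[of _ _ "{?y1, z1}"])
    moreover have "{(u, ?y2), (u, z2)} \<in> lift_edges u {e\<in>edges (A u). e \<inter> {a u} = {}}"
      using z(1,3) by (auto simp: lift_edges_def intro!: image_eqI[of _ _ "{?y2, z2}"])
    ultimately show ?thesis using al1 al2 by auto
  qed
  have "lambda_factor (H u) ((?F0 \<union> ?F1) \<union> ?F2)" using lf_iff[OF sH[OF u]] VH EH g012 by simp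
  then show ?thesis by (auto simp: Gamma_def)
qed

end

theorem mainTheorem6:
  fixes B :: "'b graph" and A :: "'b \<Rightarrow> 'a graph" and a :: "'b \<Rightarrow> 'a"
    and phi :: "'b \<Rightarrow> 'b set \<Rightarrow> 'a"
  assumes comp: "composition_data B A a phi"
    and B3: "cubic B" "k_connected 3 B"
    and A3: "\<And>u. u \<in> verts B \<Longrightarrow> cubic (A u) \<and> k_connected 3 (A u)"
    and amem: "\<And>u. u \<in> verts B \<Longrightarrow> a u \<in> verts (A u)"
    and mod6: "\<And>u. u \<in> verts B \<Longrightarrow> card (verts (A u)) mod 6 = 2"
    and h1: "\<And>u y. u \<in> verts B \<Longrightarrow> y \<in> verts (A u) - (nbrs (A u) (a u) \<union> {a u}) \<Longrightarrow>
               (\<exists>n\<in>nbrs (A u) (a u). adj (A u) y n) \<Longrightarrow>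
               Gamma (del_verts (A u) (nbrs (A u) (a u) \<union> {a u, y})) = {}"
    and h2: "\<And>u z. u \<in> verts B \<Longrightarrow> {a u, z} \<in> edges (A u) \<Longrightarrow>
               Gamma (del_verts (A u) {a u, z}) \<noteq> {}"
    and h3: "\<And>u x1 x2 x4 x5. u \<in> verts B \<Longrightarrow> distinct [x1, x2, a u, x4, x5] \<Longrightarrow>
               {x1, x2} \<in> edges (A u) \<Longrightarrow> {x2, a u} \<in> edges (A u) \<Longrightarrow>
               {a u, x4} \<in> edges (A u) \<Longrightarrow> {x4, x5} \<in> edges (A u) \<Longrightarrow>
               Gamma (del_verts (A u) {x1, x2, a u, x4, x5}) \<noteq> {}"
  shows "(\<forall>Q\<in>Gamma (compose B A a phi). \<exists>!P. P \<in> Gamma B \<and> Q \<in> GammaGP B A a phi P)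
    \<and> (\<forall>P\<in>Gamma B.
         bij_betw (\<lambda>Q. \<lambda>u\<in>verts B.
                      restrict_factor (compose B A a phi) Q (Hgraph B A a phi P u))
                  (GammaGP B A a phi P)
                  (\<Pi>\<^sub>E u\<in>verts B. Gamma (Hgraph B A a phi P u)))
    \<and> (Gamma (compose B A a phi) \<noteq> {} \<longleftrightarrow> Gamma B \<noteq> {})"
proof -
  have S: "setting B A a phi" by (rule setting.intro[OF comp A3 mod6 h1 h2 h3])
  interpret setting B A a phi by (rule S)
  have wP: "withP B A a phi P" if "P \<in> Gamma B" for P
    by (rule withP.intro[OF S]) (simp add: withP_axioms_def that)
  have g3: "\<forall>Q\<in>Gamma (compose B A a phi). \<exists>!P. P \<in> Gamma B \<and> Q \<in> GammaGP B A a phi P"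
    using gamma3 by blast
  have g2: "\<forall>P\<in>Gamma B.
         bij_betw (\<lambda>Q. \<lambda>u\<in>verts B.
                      restrict_factor (compose B A a phi) Q (Hgraph B A a phi P u))
                  (GammaGP B A a phi P)
                  (\<Pi>\<^sub>E u\<in>verts B. Gamma (Hgraph B A a phi P u))"
    using withP.bijP[OF wP] by blast
  have g4: "Gamma (compose B A a phi) \<noteq> {} \<longleftrightarrow> Gamma B \<noteq> {}"
  proof
    assume "Gamma (compose B A a phi) \<noteq> {}"
    then obtain Q where "Q \<in> Gamma (compose B A a phi)" by blast
    then show "Gamma B \<noteq> {}" using g3 by blast
  next
    assume "Gamma B \<noteq> {}"
    then obtain P where P: "P \<in> Gamma B" by blast
    have ne: "(\<Pi>\<^sub>E u\<in>verts B. Gamma (Hgraph B A a phi P u)) \<noteq> {}"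
      using withP.H_nonempty[OF wP[OF P]] by (simp add: PiE_eq_empty_iff)
    have "GammaGP B A a phi P \<noteq> {}"
    proof
      assume "GammaGP B A a phi P = {}"
      then show False using g2 P ne by (metis bij_betw_empty1)
    qed
    then obtain Q where "Q \<in> GammaGP B A a phi P" by blast
    then have "Q \<in> Gamma (compose B A a phi)" by (simp add: GammaGP_def Gamma_def)
    then show "Gamma (compose B A a phi) \<noteq> {}" by blast
  qed
  show ?thesis using g3 g2 g4 by blast
qed

end
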